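(* Let $1\le k\le r-1$ and let $\lambda$ be a $(k,r)$-admissible Young diagram with $n$ boxes. Then the $r$-conjugate $\lambda_r^*$ is $(r-k,r)$-admissible and the representation $\rho_{\lambda_r^*}^{(r-k,r)}$ of $B_n$ is equivalent to $\chi\otimes(\rho_\lambda^{(k,r)})^*$, where $(\rho_\lambda^{(k,r)})^*$ is the contragredient representation and $\chi:B_n\to U(1)$ is the character with $\chi(\sigma_i)=-q$ for all $i$.
   Context: Fix an integer $r\ge 3$ and let $q=e^{2\pi i/r}$ or $q=e^{-2\pi i/r}$, with $q^{1/2}=e^{\pm\pi i/r}$ (same sign). Quantum integers: $[m]=\frac{q^{m/2}-q^{-m/2}}{q^{1/2}-q^{-1/2}}$. A Young diagram $\lambda=[\lambda_1,\dots,\lambda_k]$, $\lambda_1\ge\dots\ge\lambda_k\ge0$, has $n=\sum\lambda_i$ boxes; a standard tableau is a filling by $1,\dots,n$ increasing along rows and columns. For $r\ge k+1$, $\lambda$ (at most $k$ rows) is $(k,r)$-admissible if $\lambda_1-\lambda_k\le r-k$. For a standard tableau $t$, $t^{(i)}$ is obtained by deleting boxes containing $n,\dots,n-i+1$; $t$ is $(k,r)$-admissible if every $t^{(i)}$ has $(k,r)$-admissible shape. If entries $m,m'$ lie in rows $r_1,r_2$ and columns $c_1,c_2$, $d_{t,m,m'}=(c_1-c_2)-(r_1-r_2)$; with $d=d_{t,i,i+1}$ put $\alpha_{t,i}=\frac{[d+1]}{[2][d]}$, $\beta_{t,i}=\sqrt{\alpha_{t,i}(1-\alpha_{t,i})}$.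 $V_\lambda^{(k,r)}$ has orthonormal basis $\{v_t\}$ over $(k,r)$-admissible standard tableaux $t$ of shape $\lambda$; $s_i(t)$ swaps $i,i+1$; $E_iv_t=\alpha_{t,i}v_t+\beta_{t,i}v_{s_i(t)}$ if $s_i(t)$ is an admissible standard tableau, else $E_iv_t=\alpha_{t,i}v_t$. The Jones–Wenzl sector $\rho_\lambda^{(k,r)}:B_n\to U(V_\lambda^{(k,r)})$ is $\sigma_i\mapsto q\,\mathrm{Id}-(1+q)E_i$. $r$-tile and $r$-conjugate: for a $(k,r)$-admissible $\lambda$ with $k$ rows and $l=r-k$, $T_\lambda$ is the $k\times l$ matrix with entries $t_{ij}=\lfloor(\lambda_i+l-j)/l\rfloor$; the $r$-conjugate $\lambda_r^*$ is the Young diagram (with at most $l$ rows) whose $i$-th row has $\sum_{j=1}^{k}t_{ji}$ boxes, i.e. the diagram associated with the transpose of $T_\lambda$ (a diagram associated with a tile has $i$-th row length equal to the $i$-th row sum of the tile). *)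

theory Defs
  imports Complex_Main
begin

text \<open>s plays the role of q^(1/2), so q = s^2.\<close>
definition qint :: "complex \<Rightarrow> int \<Rightarrow> complex" where
  "qint s m = (s powi m - s powi (-m)) / (s - inverse s)"

text \<open>A Young diagram with at most k rows is a nonincreasing list of length k
  (padded with zeros); row a (0-indexed) has lam!a boxes.\<close>
definition young :: "nat list \<Rightarrow> bool" where
  "young lam = (\<forall>a b. a \<le> b \<longrightarrow> b < length lam \<longrightarrow> lam ! b \<le> lam ! a)"

definition young_adm :: "nat \<Rightarrow> nat \<Rightarrow> nat list \<Rightarrow> bool" where
  "young_adm k r lam = (young lam \<and> length lam = k \<and>
     (0 < k \<longrightarrow> lam ! 0 - lam ! (k - 1) \<le> r - k))"

definition boxes :: "nat list \<Rightarrow> (nat \<times> nat) set" where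
  "boxes lam = {(a, b). a < length lam \<and> b < lam ! a}"

text \<open>A tableau with n entries is a list t of length n; t!(m-1) is the
  (row, column) position (0-indexed) of the entry m.\<close>
definition standard_tableau :: "nat list \<Rightarrow> (nat \<times> nat) list \<Rightarrow> bool" where
  "standard_tableau lam t =
     (length t = sum_list lam \<and> distinct t \<and> set t = boxes lam \<and>
      (\<forall>m < length t. \<forall>m' < length t.
         ((fst (t ! m) = fst (t ! m') \<and> snd (t ! m) < snd (t ! m')) \<longrightarrow> m < m') \<and>
         ((snd (t ! m) = snd (t ! m') \<and> fst (t ! m) < fst (t ! m')) \<longrightarrow> m < m')))"

text \<open>Shape of t^(i) (entries n-i+1,...,n removed) where p = n - i, as a
  k-row diagram.\<close>
definition sub_shape :: "nat \<Rightarrow> (nat \<times> nat) list \<Rightarrow> nat \<Rightarrow> nat list" where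
  "sub_shape k t p = map (\<lambda>a. card {m. m < p \<and> fst (t ! m) = a}) [0..<k]"

definition adm_tableau :: "nat \<Rightarrow> nat \<Rightarrow> (nat \<times> nat) list \<Rightarrow> bool" where
  "adm_tableau k r t = (\<forall>p \<le> length t. young_adm k r (sub_shape k t p))"

definition tabs :: "nat \<Rightarrow> nat \<Rightarrow> nat list \<Rightarrow> (nat \<times> nat) list set" where
  "tabs k r lam = {t. standard_tableau lam t \<and> adm_tableau k r t}"

text \<open>s_i swaps the entries i and i+1.\<close>
definition swp :: "nat \<Rightarrow> (nat \<times> nat) list \<Rightarrow> (nat \<times> nat) list" where
  "swp i t = t[i - 1 := t ! i, i := t ! (i - 1)]"

text \<open>d_{t,m,m'} for entries m, m' (1-based).\<close>
definition dist :: "(nat \<times> nat) list \<Rightarrow> nat \<Rightarrow> nat \<Rightarrow> int" where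
  "dist t m m' = (int (snd (t ! (m - 1))) - int (snd (t ! (m' - 1))))
               - (int (fst (t ! (m - 1))) - int (fst (t ! (m' - 1))))"

definition alpha :: "complex \<Rightarrow> (nat \<times> nat) list \<Rightarrow> nat \<Rightarrow> complex" where
  "alpha s t i = (let d = dist t i (i + 1) in qint s (d + 1) / (qint s 2 * qint s d))"

text \<open>alpha is real for q a root of unity; beta is the real square root.\<close>
definition beta :: "complex \<Rightarrow> (nat \<times> nat) list \<Rightarrow> nat \<Rightarrow> complex" where
  "beta s t i = complex_of_real (sqrt (Re (alpha s t i * (1 - alpha s t i))))"

text \<open>Matrix entry (u, t) = coefficient of v_u in E_i v_t.\<close>
definition Emat :: "complex \<Rightarrow> nat \<Rightarrow> nat \<Rightarrow> nat list \<Rightarrow> nat \<Rightarrow>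
    (nat \<times> nat) list \<Rightarrow> (nat \<times> nat) list \<Rightarrow> complex" where
  "Emat s k r lam i u t =
     (if u = t then alpha s t i
      else if u = swp i t \<and> swp i t \<in> tabs k r lam then beta s t i else 0)"

definition rho :: "complex \<Rightarrow> nat \<Rightarrow> nat \<Rightarrow> nat list \<Rightarrow> nat \<Rightarrow>
    (nat \<times> nat) list \<Rightarrow> (nat \<times> nat) list \<Rightarrow> complex" where
  "rho s k r lam i u t =
     (s\<^sup>2 * (if u = t then 1 else 0) - (1 + s\<^sup>2) * Emat s k r lam i u t)"

definition mat_inv :: "'a set \<Rightarrow> ('a \<Rightarrow> 'a \<Rightarrow> complex) \<Rightarrow> 'a \<Rightarrow> 'a \<Rightarrow> complex" where
  "mat_inv S A = (THE B. (\<forall>u v. (u \<notin> S \<or> v \<notin> S) \<longrightarrow> B u v = 0) \<and>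
      (\<forall>u\<in>S. \<forall>w\<in>S. (\<Sum>v\<in>S. B u v * A v w) = (if u = w then 1 else 0)) \<and>
      (\<forall>u\<in>S. \<forall>w\<in>S. (\<Sum>v\<in>S. A u v * B v w) = (if u = w then 1 else 0)))"

definition contragr :: "'a set \<Rightarrow> ('a \<Rightarrow> 'a \<Rightarrow> complex) \<Rightarrow> 'a \<Rightarrow> 'a \<Rightarrow> complex" where
  "contragr S A = (\<lambda>u w. mat_inv S A w u)"

text \<open>Two matrix representations of B_n, given by the images R1 i, R2 i of the
  generators sigma_i (1 \<le> i \<le> n-1) on bases indexed by S1, S2, are equivalent:
  there is an invertible intertwiner P : span S1 \<rightarrow> span S2.\<close>
definition equiv_reps :: "nat \<Rightarrow> 'a set \<Rightarrow> (nat \<Rightarrow> 'a \<Rightarrow> 'a \<Rightarrow> complex) \<Rightarrow>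
    'b set \<Rightarrow> (nat \<Rightarrow> 'b \<Rightarrow> 'b \<Rightarrow> complex) \<Rightarrow> bool" where
  "equiv_reps n S1 R1 S2 R2 =
    (\<exists>(P :: 'b \<Rightarrow> 'a \<Rightarrow> complex) (Q :: 'a \<Rightarrow> 'b \<Rightarrow> complex).
      (\<forall>u\<in>S2. \<forall>w\<in>S2. (\<Sum>v\<in>S1. P u v * Q v w) = (if u = w then 1 else 0)) \<and>
      (\<forall>u\<in>S1. \<forall>w\<in>S1. (\<Sum>v\<in>S2. Q u v * P v w) = (if u = w then 1 else 0)) \<and>
      (\<forall>i \<in> {1..<n}. \<forall>u\<in>S2. \<forall>t\<in>S1.
         (\<Sum>v\<in>S2. R2 i u v * P v t) = (\<Sum>v\<in>S1. P u v * R1 i v t)))"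

text \<open>For lam with k rows and l = r - k: t_ij = floor((lam_i + l - j)/l),
  row i of lam_r^* has sum_j t_ji boxes (i, j 1-based).\<close>
definition rtile :: "nat \<Rightarrow> nat list \<Rightarrow> nat \<Rightarrow> nat \<Rightarrow> nat" where
  "rtile r lam i j = (let l = r - length lam in (lam ! (i - 1) + l - j) div l)"

definition rconj :: "nat \<Rightarrow> nat list \<Rightarrow> nat list" where
  "rconj r lam = map (\<lambda>i. \<Sum>j = 1..length lam. rtile r lam j i) [1..<r - length lam + 1]"

end

theory Submission
  imports Defs "HOL-Library.Multiset"
begin

definition Qr :: "nat \<Rightarrow> int \<Rightarrow> real" where
  "Qr r m = sin (of_int m * (pi / r)) / sin (pi / r)"

lemma qint_cis:
  assumes "sin x \<noteq> 0"
  shows "qint (cis x) m = of_real (sin (of_int m * x) / sin x)"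
proof -
  have pw: "cis x powi n = cis (of_int n * x)" for n
    by (simp add: cis_conv_exp exp_power_int algebra_simps)
  have cd: "cis y - cis (- y) = 2 * \<i> * complex_of_real (sin y)" for y
    by (simp add: complex_eq_iff)
  have "qint (cis x) m = (cis (of_int m * x) - cis (- (of_int m * x))) / (cis x - cis (- x))"
    unfolding qint_def pw by simp
  also have "\<dots> = of_real (sin (of_int m * x) / sin x)" unfolding cd using assms
    by (simp add: field_simps)
  finally show ?thesis .
qed

lemma qint_eq:
  assumes r: "r \<ge> 3"
    and s: "s = exp (complex_of_real pi * \<i> / of_nat r) \<or> s = exp (- complex_of_real pi * \<i> / of_nat r)"
  shows "qint s m = of_real (Qr r m)"
proof -
  define th where "th = pi / r"
  have th0: "0 < th" "th < pi" using r by (auto simp: th_def field_simps)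
  have sth: "sin th \<noteq> 0" using th0 sin_gt_zero by fastforce
  from s have "s = cis th \<or> s = cis (- th)"
    by (auto simp: cis_conv_exp th_def mult.commute)
  then show ?thesis
  proof
    assume "s = cis th" then show ?thesis using qint_cis[OF sth] by (simp add: Qr_def th_def)
  next
    assume "s = cis (- th)" then show ?thesis using qint_cis[of "-th"] sth by (simp add: Qr_def th_def)
  qed
qed

definition Ar :: "nat \<Rightarrow> int \<Rightarrow> real" where
  "Ar r d = Qr r (d + 1) / (Qr r 2 * Qr r d)"

context fixes r :: nat assumes r3: "r \<ge> 3" begin

lemma th_bounds: "0 < pi / r" "pi / r \<le> pi / 3"
  using r3 by (auto simp: field_simps)

lemma sin_th_pos: "sin (pi / r) > 0"
proof -
  have "pi / r < pi" using r3 pi_gt_zero by (simp add: field_simps)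
  then show ?thesis using th_bounds(1) sin_gt_zero[of "pi / r"] by blast
qed

lemma Q_neg: "Qr r (- m) = - Qr r m"
  by (simp add: Qr_def)

lemma Q_shift: "Qr r (m + int r) = - Qr r m"
proof -
  have "of_int (m + int r) * (pi / r) = of_int m * (pi / r) + pi" using r3 by (simp add: field_simps)
  then show ?thesis by (simp add: Qr_def sin_add)
qed

lemma Q_0: "Qr r 0 = 0" by (simp add: Qr_def)
lemma Q_1: "Qr r 1 = 1" using sin_th_pos by (simp add: Qr_def)

lemma Q_rm1: "Qr r (int r - 1) = 1"
proof -
  have "Qr r (int r - 1) = - Qr r (-1)" using Q_shift[of "-1"] by simp
  then show ?thesis using Q_neg[of 1] Q_1 by simp
qed

lemma Q_rm2: "Qr r (int r - 2) = Qr r 2"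
proof -
  have "Qr r (int r - 2) = - Qr r (-2)" using Q_shift[of "-2"] by simp
  then show ?thesis using Q_neg[of 2] by simp
qed

lemma Q_rec: "Qr r (d + 1) + Qr r (d - 1) = Qr r 2 * Qr r d"
proof -
  define t where "t = pi / r"
  have "sin (of_int (d+1) * t) + sin (of_int (d - 1) * t) = 2 * cos t * sin (of_int d * t)"
    by (simp add: algebra_simps sin_add sin_diff)
  moreover have "sin (of_int 2 * t) = 2 * sin t * cos t" by (simp add: sin_double)
  ultimately show ?thesis using sin_th_pos unfolding Qr_def t_def[symmetric]
    by (simp add: field_simps)
qed

lemma Q_pos: "1 \<le> d \<Longrightarrow> d \<le> int r - 1 \<Longrightarrow> Qr r d > 0"
proof -
  assume d: "1 \<le> d" "d \<le> int r - 1"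
  have "0 < of_int d * (pi / r)" using d th_bounds by simp
  moreover have "of_int d * (pi / r) < pi"
  proof -
    have "real_of_int d < r" using d by linarith
    then have "of_int d * (pi / r) < r * (pi / r)" using th_bounds by (intro mult_strict_right_mono) auto
    then show ?thesis using r3 by simp
  qed
  ultimately show ?thesis unfolding Qr_def using sin_th_pos sin_gt_zero by simp
qed

lemma Q_nonneg: "0 \<le> d \<Longrightarrow> d \<le> int r \<Longrightarrow> Qr r d \<ge> 0"
proof -
  assume d: "0 \<le> d" "d \<le> int r"
  have "0 \<le> of_int d * (pi / r)" using d th_bounds by simp
  moreover have "of_int d * (pi / r) \<le> pi"
  proof -
    have "real_of_int d \<le> r" using d by linarith
    then have "of_int d * (pi / r) \<le> r * (pi / r)" using th_bounds by (intro mult_right_mono) auto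
    then show ?thesis using r3 by simp
  qed
  ultimately show ?thesis unfolding Qr_def using sin_th_pos sin_ge_zero by simp
qed

lemma Q2_pos: "Qr r 2 > 0" using Q_pos[of 2] r3 by simp

lemma A_shift: "Ar r (d + int r) = Ar r d"
proof -
  have "Qr r (d + int r + 1) = - Qr r (d + 1)" using Q_shift[of "d+1"] by (simp add: algebra_simps)
  then show ?thesis unfolding Ar_def using Q_shift[of d] by simp
qed

lemma A_per: "Ar r (d + int r * j) = Ar r d"
proof (induction j arbitrary: d rule: int_induct[where k = 0])
  case base then show ?case by simp
next
  case (step1 i)
  have "Ar r (d + int r * (i + 1)) = Ar r ((d + int r * i) + int r)" by (simp add: algebra_simps)
  then show ?case using A_shift step1 by simp
next
  case (step2 i)
  have "Ar r (d + int r * i) = Ar r ((d + int r * (i - 1)) + int r)" by (simp add: algebra_simps)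
  then show ?case using A_shift step2 by simp
qed

lemma one_minus_A: "Qr r d \<noteq> 0 \<Longrightarrow> 1 - Ar r d = Qr r (d - 1) / (Qr r 2 * Qr r d)"
  using Q_rec[of d] Q2_pos unfolding Ar_def by (simp add: field_simps)

lemma A_neg: "Qr r d \<noteq> 0 \<Longrightarrow> Ar r (- d) = 1 - Ar r d"
proof -
  assume "Qr r d \<noteq> 0"
  have "Qr r (- d + 1) = - Qr r (d - 1)" using Q_neg[of "d - 1"] by simp
  then have "Ar r (- d) = Qr r (d - 1) / (Qr r 2 * Qr r d)" unfolding Ar_def using Q_neg[of d]
    by (simp add: field_simps)
  then show ?thesis using one_minus_A[OF \<open>Qr r d \<noteq> 0\<close>] by simp
qed

lemma Q_nz: "d \<noteq> 0 \<Longrightarrow> \<bar>d\<bar> \<le> int r - 1 \<Longrightarrow> Qr r d \<noteq> 0"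
  using Q_pos[of d] Q_pos[of "-d"] Q_neg[of d] by (cases "d > 0") auto

lemma A_prod: "d \<noteq> 0 \<Longrightarrow> \<bar>d\<bar> \<le> int r - 1 \<Longrightarrow> Ar r d * (1 - Ar r d) \<ge> 0"
proof -
  assume d: "d \<noteq> 0" "\<bar>d\<bar> \<le> int r - 1"
  have nz: "Qr r d \<noteq> 0" using Q_nz d by simp
  have "Ar r d * (1 - Ar r d) = (Qr r (d + 1) * Qr r (d - 1)) / (Qr r 2 * Qr r d)^2"
  proof -
    have "Ar r d * (1 - Ar r d) = Qr r (d + 1) / (Qr r 2 * Qr r d) * (Qr r (d - 1) / (Qr r 2 * Qr r d))"
      using one_minus_A[OF nz] unfolding Ar_def by simp
    then show ?thesis by (simp add: power2_eq_square)
  qed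
  moreover have "Qr r (d + 1) * Qr r (d - 1) \<ge> 0"
  proof (cases "d > 0")
    case True
    then show ?thesis using Q_nonneg[of "d+1"] Q_nonneg[of "d - 1"] d by simp
  next
    case False
    then have "Qr r (d + 1) = - Qr r (- d - 1)" "Qr r (d - 1) = - Qr r (1 - d)"
      using Q_neg[of "-d - 1"] Q_neg[of "1 - d"] by (simp_all add: algebra_simps)
    then show ?thesis using Q_nonneg[of "- d - 1"] Q_nonneg[of "1 - d"] d False by simp
  qed
  ultimately show ?thesis by simp
qed

lemma A_1: "Ar r 1 = 1" unfolding Ar_def using Q_1 Q2_pos by simp
lemma A_m1: "Ar r (-1) = 0" unfolding Ar_def using Q_0 by simp
lemma A_1mr: "Ar r (1 - int r) = 1"
proof -
  have "Ar r (1 - int r) = Ar r (- (int r - 1))" by simp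
  also have "\<dots> = 1 - Ar r (int r - 1)" using A_neg[of "int r - 1"] Q_rm1 by simp
  also have "Ar r (int r - 1) = 0" unfolding Ar_def using Q_shift[of 0] Q_0 by simp
  finally show ?thesis by simp
qed

end

lemma length_sub_shape[simp]: "length (sub_shape k t p) = k"
  by (simp add: sub_shape_def)

lemma nth_sub_shape: "a < k \<Longrightarrow> sub_shape k t p ! a = card {m. m < p \<and> fst (t ! m) = a}"
  by (simp add: sub_shape_def)

lemma sh_Suc: "a < k \<Longrightarrow> sub_shape k t (Suc p) ! a = sub_shape k t p ! a + (if fst (t ! p) = a then 1 else 0)"
proof -
  assume a: "a < k"
  have "{m. m < Suc p \<and> fst (t ! m) = a} = {m. m < p \<and> fst (t ! m) = a} \<union> (if fst (t ! p) = a then {p} else {})"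
    by (auto simp: less_Suc_eq)
  then show ?thesis using a by (simp add: nth_sub_shape card_insert_if)
qed

lemma sh_mono: "p \<le> p' \<Longrightarrow> a < k \<Longrightarrow> sub_shape k t p ! a \<le> sub_shape k t p' ! a"
  unfolding nth_sub_shape by (rule card_mono) auto

lemma sh_strict: "p < p' \<Longrightarrow> fst (t ! p) = a \<Longrightarrow> a < k \<Longrightarrow> sub_shape k t p ! a < sub_shape k t p' ! a"
proof -
  assume h: "p < p'" "fst (t ! p) = a" "a < k"
  have "sub_shape k t (Suc p) ! a = sub_shape k t p ! a + 1" using sh_Suc[OF h(3)] h(2) by simp
  moreover have "sub_shape k t (Suc p) ! a \<le> sub_shape k t p' ! a" using h by (intro sh_mono) auto
  ultimately show ?thesis by simp
qed

definition tchar :: "nat \<Rightarrow> nat \<Rightarrow> nat list \<Rightarrow> (nat \<times> nat) list \<Rightarrow> bool" where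
  "tchar k r lam t = (length lam = k \<and> (\<forall>p \<le> length t. young_adm k r (sub_shape k t p)) \<and>
     sub_shape k t (length t) = lam \<and>
     (\<forall>m < length t. fst (t ! m) < k \<and> snd (t ! m) = sub_shape k t m ! fst (t ! m)))"

lemma card_nth_distinct:
  assumes "distinct t"
  shows "card {m. m < length t \<and> P (t ! m)} = card {x \<in> set t. P x}"
proof -
  have "inj_on (nth t) {m. m < length t \<and> P (t ! m)}"
    using assms by (auto simp: inj_on_def nth_eq_iff_index_eq)
  moreover have "nth t ` {m. m < length t \<and> P (t ! m)} = {x \<in> set t. P x}"
    by (auto simp: in_set_conv_nth)
  ultimately show ?thesis by (metis card_image)
qed

lemma card_boxes: "card (boxes lam) = sum_list lam"
proof -
  have "boxes lam = Sigma {..<length lam} (\<lambda>a. {..<lam ! a})" by (auto simp: boxes_def)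
  then have "card (boxes lam) = (\<Sum>a<length lam. lam ! a)" by (simp add: card_SigmaI)
  also have "\<dots> = sum_list lam" by (simp add: sum_list_sum_nth atLeast0LessThan)
  finally show ?thesis .
qed

lemma finite_boxes: "finite (boxes lam)"
proof -
  have "boxes lam = Sigma {..<length lam} (\<lambda>a. {..<lam ! a})" by (auto simp: boxes_def)
  then show ?thesis by simp
qed

lemma tabs_imp_tchar:
  assumes len: "length lam = k" and t: "t \<in> tabs k r lam"
  shows "tchar k r lam t"
proof -
  have st: "standard_tableau lam t" and ad: "adm_tableau k r t" using t by (auto simp: tabs_def)
  have lt: "length t = sum_list lam" and dt: "distinct t" and stb: "set t = boxes lam"
    using st unfolding standard_tableau_def by auto
  have ordA: "\<forall>m < length t. \<forall>m' < length t.
         ((fst (t ! m) = fst (t ! m') \<and> snd (t ! m) < snd (t ! m')) \<longrightarrow> m < m') \<and>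
         ((snd (t ! m) = snd (t ! m') \<and> fst (t ! m) < fst (t ! m')) \<longrightarrow> m < m')"
    using st unfolding standard_tableau_def by (elim conjE) assumption
  have ord: "\<And>m m'. m < length t \<Longrightarrow> m' < length t \<Longrightarrow>
         ((fst (t ! m) = fst (t ! m') \<and> snd (t ! m) < snd (t ! m')) \<longrightarrow> m < m') \<and>
         ((snd (t ! m) = snd (t ! m') \<and> fst (t ! m) < fst (t ! m')) \<longrightarrow> m < m')"
    using ordA by blast
  have inb: "m < length t \<Longrightarrow> fst (t ! m) < k \<and> snd (t ! m) < lam ! fst (t ! m)" for m
    using stb len nth_mem[of m t] by (auto simp: boxes_def)
  have shn: "sub_shape k t (length t) = lam"
  proof (rule nth_equalityI)
    show "length (sub_shape k t (length t)) = length lam" using len by simp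
    fix a assume "a < length (sub_shape k t (length t))"
    then have a: "a < k" by simp
    have "sub_shape k t (length t) ! a = card {m. m < length t \<and> fst (t ! m) = a}"
      using a by (simp add: nth_sub_shape)
    also have "\<dots> = card {x \<in> set t. fst x = a}" using card_nth_distinct[OF dt, of "\<lambda>x. fst x = a"] by simp
    also have "{x \<in> set t. fst x = a} = {a} \<times> {..<lam ! a}" using stb a len by (auto simp: boxes_def)
    finally show "sub_shape k t (length t) ! a = lam ! a" by simp
  qed
  have col: "snd (t ! m) = sub_shape k t m ! fst (t ! m)" if m: "m < length t" for m
  proof -
    obtain a c where tm: "t ! m = (a, c)" by fastforce
    have a: "a < k" and c: "c < lam ! a" using inb[OF m] tm by auto
    define M where "M = {m'. m' < m \<and> fst (t ! m') = a}"
    have inj: "inj_on (\<lambda>m'. snd (t ! m')) M"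
    proof (rule inj_onI)
      fix x y assume "x \<in> M" "y \<in> M" "snd (t ! x) = snd (t ! y)"
      then have "t ! x = t ! y" by (simp add: M_def prod_eq_iff)
      then show "x = y" using \<open>x \<in> M\<close> \<open>y \<in> M\<close> m dt by (simp add: M_def nth_eq_iff_index_eq)
    qed
    have img: "(\<lambda>m'. snd (t ! m')) ` M = {..<c}"
    proof
      show "(\<lambda>m'. snd (t ! m')) ` M \<subseteq> {..<c}"
      proof
        fix x assume "x \<in> (\<lambda>m'. snd (t ! m')) ` M"
        then obtain m' where m': "m' < m" "fst (t ! m') = a" and x: "x = snd (t ! m')" by (auto simp: M_def)
        have "x \<noteq> c"
        proof
          assume "x = c" then have "t ! m' = t ! m" using tm m' x by (simp add: prod_eq_iff)
          then show False using m' m dt by (simp add: nth_eq_iff_index_eq)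
        qed
        moreover have "\<not> c < x" using ord[of m m'] m' m tm x by auto
        ultimately show "x \<in> {..<c}" by simp
      qed
    next
      show "{..<c} \<subseteq> (\<lambda>m'. snd (t ! m')) ` M"
      proof
        fix c' assume "c' \<in> {..<c}"
        then have "(a, c') \<in> set t" using stb c a len by (auto simp: boxes_def)
        then obtain m' where m': "m' < length t" "t ! m' = (a, c')" by (auto simp: in_set_conv_nth)
        have "m' < m" using ord[of m' m] m' m tm \<open>c' \<in> {..<c}\<close> by auto
        then show "c' \<in> (\<lambda>m'. snd (t ! m')) ` M" using m' by (auto simp: M_def image_iff intro!: bexI[of _ m'])
      qed
    qed
    have "card M = c" using card_image[OF inj] img by simp
    then show ?thesis using a tm by (simp add: nth_sub_shape M_def)
  qed
  show ?thesis unfolding tchar_def using len ad shn col inb by (auto simp: adm_tableau_def)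
qed

lemma tchar_imp_tabs:
  assumes tc: "tchar k r lam t"
  shows "t \<in> tabs k r lam"
proof -
  have len: "length lam = k" and ya: "\<And>p. p \<le> length t \<Longrightarrow> young_adm k r (sub_shape k t p)"
    and shn: "sub_shape k t (length t) = lam"
    and rk: "\<And>m. m < length t \<Longrightarrow> fst (t ! m) < k"
    and cl: "\<And>m. m < length t \<Longrightarrow> snd (t ! m) = sub_shape k t m ! fst (t ! m)"
    using tc unfolding tchar_def by simp_all
  let ?n = "length t"
  have lt: "?n = sum_list lam"
  proof -
    have "sum_list lam = (\<Sum>a<k. lam ! a)" using len by (simp add: sum_list_sum_nth atLeast0LessThan)
    also have "\<dots> = (\<Sum>a<k. card {m. m < ?n \<and> fst (t ! m) = a})"
      using shn by (simp add: nth_sub_shape[symmetric])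
    also have "\<dots> = card (\<Union>a<k. {m. m < ?n \<and> fst (t ! m) = a})"
      by (rule card_UN_disjoint[symmetric]) auto
    also have "(\<Union>a<k. {m. m < ?n \<and> fst (t ! m) = a}) = {..<?n}" using rk by auto
    finally show ?thesis by simp
  qed
  have colv: "m < ?n \<Longrightarrow> snd (t ! m) = sub_shape k t m ! fst (t ! m)" for m using cl by simp
  have dt: "distinct t"
  proof (subst distinct_conv_nth, intro allI impI)
    fix m m' assume h: "m < ?n" "m' < ?n" "m \<noteq> m'"
    show "t ! m \<noteq> t ! m'"
    proof
      assume eq: "t ! m = t ! m'"
      { fix x y assume xy: "x < y" "y < ?n" "t ! x = t ! y"
        have "sub_shape k t x ! fst (t ! x) < sub_shape k t y ! fst (t ! x)"
          using xy rk by (intro sh_strict) auto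
        then have False using colv[of x] colv[of y] xy by simp }
      then show False using h eq by (metis linorder_neqE_nat)
    qed
  qed
  have sub: "set t \<subseteq> boxes lam"
  proof
    fix x assume "x \<in> set t"
    then obtain m where m: "m < ?n" "x = t ! m" by (auto simp: in_set_conv_nth)
    have "sub_shape k t m ! fst x < sub_shape k t ?n ! fst x"
      using m rk by (intro sh_strict) auto
    then show "x \<in> boxes lam" using m colv[of m] rk[of m] shn len by (auto simp: boxes_def)
  qed
  have stb: "set t = boxes lam"
    using card_subset_eq[OF finite_boxes sub] by (simp add: card_boxes distinct_card[OF dt] lt)
  have ord: "((fst (t ! m) = fst (t ! m') \<and> snd (t ! m) < snd (t ! m')) \<longrightarrow> m < m') \<and>
         ((snd (t ! m) = snd (t ! m') \<and> fst (t ! m) < fst (t ! m')) \<longrightarrow> m < m')"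
    if m: "m < ?n" "m' < ?n" for m m'
  proof (intro conjI impI)
    assume h: "fst (t ! m) = fst (t ! m') \<and> snd (t ! m) < snd (t ! m')"
    show "m < m'"
    proof (rule ccontr)
      assume "\<not> m < m'"
      then have "sub_shape k t m' ! fst (t ! m) \<le> sub_shape k t m ! fst (t ! m)"
        using rk m by (intro sh_mono) auto
      moreover have "snd (t ! m) = sub_shape k t m ! fst (t ! m)" using colv m by simp
      moreover have "snd (t ! m') = sub_shape k t m' ! fst (t ! m)" using colv[of m'] m h by simp
      ultimately show False using h by linarith
    qed
  next
    assume h: "snd (t ! m) = snd (t ! m') \<and> fst (t ! m) < fst (t ! m')"
    show "m < m'"
    proof (rule ccontr)
      assume "\<not> m < m'"
      then have "m' < m" using h by (metis linorder_neqE_nat order_less_irrefl)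
      define a where "a = fst (t ! m)"
      define a' where "a' = fst (t ! m')"
      have aa: "a < a'" "a' < k" using h rk m by (auto simp: a_def a'_def)
      have y: "young_adm k r (sub_shape k t (Suc m'))" using ya \<open>m' < m\<close> m by simp
      then have "sub_shape k t (Suc m') ! a' \<le> sub_shape k t (Suc m') ! a"
        using aa by (auto simp: young_adm_def young_def)
      moreover have "sub_shape k t (Suc m') ! a' = snd (t ! m') + 1"
        using sh_Suc[of a' k t m'] aa colv[of m'] m by (simp add: a'_def)
      moreover have "sub_shape k t (Suc m') ! a \<le> sub_shape k t m ! a"
        using \<open>m' < m\<close> aa by (intro sh_mono) auto
      ultimately show False using colv[of m] m h by (simp add: a_def)
    qed
  qed
  have "standard_tableau lam t" unfolding standard_tableau_def using lt dt stb ord by blast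
  moreover have "adm_tableau k r t" using ya by (simp add: adm_tableau_def)
  ultimately show ?thesis by (simp add: tabs_def)
qed

lemma tabs_iff: "length lam = k \<Longrightarrow> t \<in> tabs k r lam \<longleftrightarrow> tchar k r lam t"
  using tabs_imp_tchar tchar_imp_tabs by blast

lemma mod_shift_zero:
  fixes x l j :: nat assumes "j < l"
  shows "(x + (l - j)) mod l = 0 \<longleftrightarrow> x mod l = j"
proof -
  have "(x + (l - j)) mod l = (x mod l + (l - j)) mod l" by (simp add: mod_add_left_eq)
  moreover have "x mod l < l" using assms by simp
  moreover have "(z + (l - j)) mod l = 0 \<longleftrightarrow> z = j" if "z < l" for z
  proof (cases "z < j")
    case True
    then have "z + (l - j) < l" "0 < z + (l - j)" using assms by auto
    then show ?thesis using True assms by simp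
  next
    case False
    then have "z + (l - j) = l + (z - j)" using assms by simp
    moreover have "z - j < l" using that by simp
    then have "(l + (z - j)) mod l = z - j" by simp
    ultimately show ?thesis using False by (simp del: mod_add_self1)
  qed
  ultimately show ?thesis by simp
qed

lemma cnt_mod: "0 < l \<Longrightarrow> j < l \<Longrightarrow> card {c. c < x \<and> c mod l = j} = (x + l - Suc j) div l"
proof (induction x)
  case 0
  then show ?case by simp
next
  case (Suc x)
  have "{c. c < Suc x \<and> c mod l = j} = {c. c < x \<and> c mod l = j} \<union> (if x mod l = j then {x} else {})"
    by (auto simp: less_Suc_eq)
  then have "card {c. c < Suc x \<and> c mod l = j} = card {c. c < x \<and> c mod l = j} + (if x mod l = j then 1 else 0)"
    by (simp add: card_insert_if)
  also have "\<dots> = (x + l - Suc j) div l + (if x mod l = j then 1 else 0)" using Suc by simp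
  also have "\<dots> = (Suc x + l - Suc j) div l"
  proof -
    define y where "y = x + l - Suc j"
    have y: "Suc x + l - Suc j = Suc y" using Suc.prems by (simp add: y_def)
    have y2: "Suc y = x + (l - j)" using Suc.prems by (simp add: y_def)
    have "Suc y div l = y div l + (if Suc y mod l = 0 then 1 else 0)"
      using Suc.prems by (simp add: div_Suc)
    then show ?thesis unfolding y y_def[symmetric] using mod_shift_zero[OF Suc.prems(2), of x] y2 by simp
  qed
  finally show ?case .
qed

lemma sum_step: "a \<le> k \<Longrightarrow> (\<Sum>a'<k. if a' < a then Suc b else (b::nat)) = b * k + a"
proof (induction k)
  case 0 then show ?case by simp
next
  case (Suc k)
  show ?case
  proof (cases "a = Suc k")
    case True
    then have "(\<Sum>a'<Suc k. if a' < a then Suc b else b) = (\<Sum>a'<Suc k. Suc b)" by (intro sum.cong) auto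
    then show ?thesis using True by simp
  next
    case False
    then have "a \<le> k" using Suc.prems by simp
    then show ?thesis using Suc.IH by simp
  qed
qed

lemma sum_shift1: "(\<Sum>j = 1..k. f j) = (\<Sum>a<k. f (Suc a))"
  by (induction k) (auto simp: sum.atLeast_Suc_atMost)

lemma rconj_nth:
  assumes "length lam = k" "r = k + l" "j < l"
  shows "rconj r lam ! j = (\<Sum>a<k. (lam ! a + l - Suc j) div l)"
proof -
  have "rconj r lam ! j = (\<Sum>j' = 1..k. rtile r lam j' (Suc j))"
    using assms by (simp add: rconj_def nth_map del: upt_Suc)
  also have "\<dots> = (\<Sum>a<k. rtile r lam (Suc a) (Suc j))" by (rule sum_shift1)
  finally show ?thesis using assms by (simp add: rtile_def)
qed

lemma length_rconj: "length (rconj r lam) = r - length lam"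
  by (simp add: rconj_def del: upt_Suc)

lemma div_le_Suc: "0 < l \<Longrightarrow> (x + l - Suc 0) div l \<le> x div l + (1::nat)"
proof -
  assume l: "0 < l"
  have "x + l - Suc 0 < l * Suc (Suc (x div l))"
  proof -
    have "x < l * Suc (x div l)" using l by (simp add: dividend_less_times_div mult.commute)
    then show ?thesis by (simp add: algebra_simps)
  qed
  then have "(x + l - Suc 0) div l < Suc (Suc (x div l))" by (simp add: div_less_iff_less_mult mult.commute l)
  then show ?thesis by simp
qed

lemma rconj_adm:
  assumes ya: "young_adm k r lam" and r: "r = k + l" and l: "0 < l"
  shows "young_adm l r (rconj r lam)"
proof -
  have len: "length lam = k" using ya by (simp add: young_adm_def)
  have lenr: "length (rconj r lam) = l" using len r by (simp add: length_rconj)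
  have yg: "young (rconj r lam)"
    unfolding young_def
  proof (intro allI impI)
    fix a b assume "a \<le> b" "b < length (rconj r lam)"
    then show "rconj r lam ! b \<le> rconj r lam ! a" using lenr
      by (simp add: rconj_nth[OF len r] div_le_mono sum_mono)
  qed
  have "rconj r lam ! 0 \<le> rconj r lam ! (l - 1) + k"
  proof -
    have "rconj r lam ! 0 = (\<Sum>a<k. (lam ! a + l - Suc 0) div l)" using rconj_nth[OF len r l] by simp
    also have "\<dots> \<le> (\<Sum>a<k. lam ! a div l + 1)" by (intro sum_mono div_le_Suc l)
    also have "\<dots> = (\<Sum>a<k. lam ! a div l) + k" unfolding sum.distrib by simp
    also have "(\<Sum>a<k. lam ! a div l) = rconj r lam ! (l - 1)" using rconj_nth[OF len r, of "l - 1"] l by simp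
    finally show ?thesis .
  qed
  then show ?thesis unfolding young_adm_def using yg lenr r by auto
qed

lemma col_count:
  fixes mu mu' :: "nat \<Rightarrow> nat"
  assumes l: "0 < l" and a: "a < k"
    and mu': "\<And>x. mu' x = mu x + (if x = a then 1 else 0)"
    and y: "\<And>x y. x \<le> y \<Longrightarrow> y < k \<Longrightarrow> mu y \<le> mu x"
    and y': "\<And>x y. x \<le> y \<Longrightarrow> y < k \<Longrightarrow> mu' y \<le> mu' x"
    and ad: "mu 0 \<le> mu (k - 1) + l" and ad': "mu' 0 \<le> mu' (k - 1) + l"
  shows "(\<Sum>x<k. (mu x + l - Suc (mu a mod l)) div l) = (mu a div l) * k + a"
proof -
  define c where "c = mu a"
  define j where "j = c mod l"
  define b where "b = c div l"
  have cb: "c = b * l + j" by (simp add: b_def j_def)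
  have jl: "j < l" using l by (simp add: j_def)
  have h: "(mu x + l - Suc j) div l = (if x < a then Suc b else b)" if x: "x < k" for x
  proof (cases "x < a")
    case True
    have lo: "c + 1 \<le> mu x" using y'[of x a] True a mu'[of x] mu'[of a] by (simp add: c_def)
    have hi: "mu x \<le> c + l"
    proof -
      have "a \<le> k - 1" using a by simp
      then show ?thesis using y[of 0 x] y[of a "k - 1"] ad a x by (simp add: c_def)
    qed
    have "(mu x + l - Suc j) div l = Suc b"
      by (rule div_nat_eqI) (use lo hi cb jl in \<open>simp_all add: algebra_simps\<close>)
    then show ?thesis using True by simp
  next
    case False
    have hi: "mu x \<le> c" using y[of a x] False x by (simp add: c_def)
    have lo: "c + 1 \<le> mu x + l"
    proof (cases "x = a")
      case True then show ?thesis using l by (simp add: c_def)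
    next
      case False
      then have "a < x" using \<open>\<not> x < a\<close> by simp
      then have km: "k - 1 \<noteq> a" "x \<le> k - 1" using x by auto
      have "mu' a \<le> mu' 0" using y'[of 0 a] a by simp
      moreover have "mu' (k - 1) \<le> mu x" using y[of x "k - 1"] km x mu'[of "k - 1"] by simp
      ultimately show ?thesis using ad' mu'[of a] by (simp add: c_def)
    qed
    have "(mu x + l - Suc j) div l = b"
      by (rule div_nat_eqI) (use lo hi cb jl in \<open>simp_all add: algebra_simps\<close>)
    then show ?thesis using False by simp
  qed
  have "(\<Sum>x<k. (mu x + l - Suc j) div l) = (\<Sum>x<k. if x < a then Suc b else b)"
    by (intro sum.cong) (auto simp: h)
  also have "\<dots> = b * k + a" using a by (intro sum_step) simp
  finally show ?thesis by (simp add: j_def b_def c_def)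
qed

definition fk :: "nat \<Rightarrow> nat \<Rightarrow> nat \<times> nat \<Rightarrow> nat \<times> nat" where
  "fk k l x = (snd x mod l, (snd x div l) * k + fst x)"

lemma tchar_facts:
  assumes "tchar k r lam t"
  shows "length lam = k" "\<And>p. p \<le> length t \<Longrightarrow> young_adm k r (sub_shape k t p)"
    "sub_shape k t (length t) = lam" "\<And>m. m < length t \<Longrightarrow> fst (t ! m) < k"
    "\<And>m. m < length t \<Longrightarrow> snd (t ! m) = sub_shape k t m ! fst (t ! m)"
  using assms unfolding tchar_def by simp_all

lemma count_cols:
  assumes tc: "tchar k r lam t" and p: "p \<le> length t" and a: "a < k"
  shows "card {m. m < p \<and> fst (t ! m) = a \<and> P (snd (t ! m))} = card {c. c < sub_shape k t p ! a \<and> P c}"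
proof -
  note tf = tchar_facts[OF tc]
  define M where "M = {m. m < p \<and> fst (t ! m) = a}"
  have col: "m \<in> M \<Longrightarrow> snd (t ! m) = sub_shape k t m ! a" for m
    using tf(5)[of m] p by (auto simp: M_def)
  have inj: "inj_on (\<lambda>m. snd (t ! m)) M"
  proof (rule inj_onI)
    fix x y assume xy: "x \<in> M" "y \<in> M" "snd (t ! x) = snd (t ! y)"
    show "x = y"
    proof (rule ccontr)
      assume "x \<noteq> y"
      then consider "x < y" | "y < x" by linarith
      then show False
      proof cases
        case 1
        have "sub_shape k t x ! a < sub_shape k t y ! a" using 1 xy a by (intro sh_strict) (auto simp: M_def)
        then show False using col[of x] col[of y] xy by simp
      next
        case 2
        have "sub_shape k t y ! a < sub_shape k t x ! a" using 2 xy a by (intro sh_strict) (auto simp: M_def)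
        then show False using col[of x] col[of y] xy by simp
      qed
    qed
  qed
  have sub: "(\<lambda>m. snd (t ! m)) ` M \<subseteq> {..<sub_shape k t p ! a}"
  proof
    fix c assume "c \<in> (\<lambda>m. snd (t ! m)) ` M"
    then obtain m where m: "m \<in> M" "c = snd (t ! m)" by auto
    have "sub_shape k t m ! a < sub_shape k t p ! a" using m a by (intro sh_strict) (auto simp: M_def)
    then show "c \<in> {..<sub_shape k t p ! a}" using m col by simp
  qed
  have cM: "card M = sub_shape k t p ! a" using a by (simp add: nth_sub_shape M_def)
  have img: "(\<lambda>m. snd (t ! m)) ` M = {..<sub_shape k t p ! a}"
  proof (rule card_subset_eq[OF _ sub])
    show "finite {..<sub_shape k t p ! a}" by simp
    show "card ((\<lambda>m. snd (t ! m)) ` M) = card {..<sub_shape k t p ! a}"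
      using card_image[OF inj] cM by simp
  qed
  have e1: "{m. m < p \<and> fst (t ! m) = a \<and> P (snd (t ! m))} = {m \<in> M. P (snd (t ! m))}"
    by (auto simp: M_def)
  have e2: "(\<lambda>m. snd (t ! m)) ` {m \<in> M. P (snd (t ! m))} = {c. c < sub_shape k t p ! a \<and> P c}"
  proof -
    have "(\<lambda>m. snd (t ! m)) ` {m \<in> M. P (snd (t ! m))} = {c \<in> (\<lambda>m. snd (t ! m)) ` M. P c}"
      by blast
    then show ?thesis unfolding img by auto
  qed
  have e3: "inj_on (\<lambda>m. snd (t ! m)) {m \<in> M. P (snd (t ! m))}"
    using inj by (rule inj_on_subset) auto
  show ?thesis unfolding e1 e2[symmetric] card_image[OF e3] ..
qed

lemma sh_phi:
  assumes tc: "tchar k r lam t" and l: "0 < l" and p: "p \<le> length t" and j: "j < l"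
  shows "sub_shape l (map (fk k l) t) p ! j = (\<Sum>a<k. (sub_shape k t p ! a + l - Suc j) div l)"
proof -
  note tf = tchar_facts[OF tc]
  have "sub_shape l (map (fk k l) t) p ! j = card {m. m < p \<and> fst (map (fk k l) t ! m) = j}"
    using j by (simp add: nth_sub_shape)
  also have "{m. m < p \<and> fst (map (fk k l) t ! m) = j} = {m. m < p \<and> snd (t ! m) mod l = j}"
    using p by (auto simp: fk_def)
  also have "{m. m < p \<and> snd (t ! m) mod l = j} = (\<Union>a<k. {m. m < p \<and> fst (t ! m) = a \<and> snd (t ! m) mod l = j})"
    using tf(4) p by auto
  also have "card \<dots> = (\<Sum>a<k. card {m. m < p \<and> fst (t ! m) = a \<and> snd (t ! m) mod l = j})"
    by (rule card_UN_disjoint) auto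
  also have "\<dots> = (\<Sum>a<k. card {c. c < sub_shape k t p ! a \<and> c mod l = j})"
    by (intro sum.cong refl count_cols[OF tc p]) simp
  also have "\<dots> = (\<Sum>a<k. (sub_shape k t p ! a + l - Suc j) div l)"
    by (intro sum.cong refl cnt_mod l j)
  finally show ?thesis .
qed

lemma sh_phi_rconj:
  assumes tc: "tchar k r lam t" and l: "0 < l" and r: "r = k + l" and p: "p \<le> length t"
  shows "sub_shape l (map (fk k l) t) p = rconj r (sub_shape k t p)"
proof (rule nth_equalityI)
  show "length (sub_shape l (map (fk k l) t) p) = length (rconj r (sub_shape k t p))"
    using r by (simp add: length_rconj)
  fix j assume "j < length (sub_shape l (map (fk k l) t) p)"
  then have j: "j < l" by simp
  show "sub_shape l (map (fk k l) t) p ! j = rconj r (sub_shape k t p) ! j"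
    using sh_phi[OF tc l p j] rconj_nth[of "sub_shape k t p" k r l j] r j by simp
qed

lemma phi_tchar:
  assumes tc: "tchar k r lam t" and l: "0 < l" and k: "0 < k" and r: "r = k + l"
  shows "tchar l r (rconj r lam) (map (fk k l) t)"
proof -
  note tf = tchar_facts[OF tc]
  let ?u = "map (fk k l) t"
  have len: "length (rconj r lam) = l" using tf(1) r by (simp add: length_rconj)
  have ya: "young_adm l r (sub_shape l ?u p)" if "p \<le> length ?u" for p
    using sh_phi_rconj[OF tc l r, of p] that rconj_adm[OF tf(2) r l, of p] by simp
  have fin: "sub_shape l ?u (length ?u) = rconj r lam"
    using sh_phi_rconj[OF tc l r, of "length t"] tf(3) by simp
  have cl: "fst (?u ! m) < l \<and> snd (?u ! m) = sub_shape l ?u m ! fst (?u ! m)" if m: "m < length ?u" for m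
  proof
    show "fst (?u ! m) < l" using m l by (simp add: fk_def)
    define a where "a = fst (t ! m)"
    define mu where "mu = (\<lambda>x. sub_shape k t m ! x)"
    define mu' where "mu' = (\<lambda>x. sub_shape k t (Suc m) ! x)"
    have m': "m < length t" using m by simp
    have a: "a < k" using tf(4)[OF m'] by (simp add: a_def)
    have c: "snd (t ! m) = mu a" using tf(5)[OF m'] by (simp add: a_def mu_def)
    have y1: "young_adm k r (sub_shape k t m)" using tf(2) m' by simp
    have y2: "young_adm k r (sub_shape k t (Suc m))" using tf(2) m' by simp
    have mu'mu: "mu' x = mu x + (if x = a then 1 else 0)" if "x < k" for x
      using sh_Suc[OF that, of t m] by (auto simp: mu_def mu'_def a_def)
    have "(\<Sum>x<k. (mu x + l - Suc (mu a mod l)) div l) = (mu a div l) * k + a"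
    proof (rule col_count[OF l a, where mu' = "\<lambda>x. if x < k then mu' x else mu x + (if x = a then 1 else 0)"])
      show "\<And>x. (if x < k then mu' x else mu x + (if x = a then 1 else 0)) = mu x + (if x = a then 1 else 0)"
        using mu'mu by simp
      show "\<And>x y. x \<le> y \<Longrightarrow> y < k \<Longrightarrow> mu y \<le> mu x"
        using y1 by (auto simp: young_adm_def young_def mu_def)
      show "\<And>x y. x \<le> y \<Longrightarrow> y < k \<Longrightarrow> (if y < k then mu' y else mu y + (if y = a then 1 else 0))
          \<le> (if x < k then mu' x else mu x + (if x = a then 1 else 0))"
        using y2 by (auto simp: young_adm_def young_def mu'_def)
      show "mu 0 \<le> mu (k - 1) + l" using y1 k r by (auto simp: young_adm_def mu_def)
      show "(if 0 < k then mu' 0 else mu 0 + (if 0 = a then 1 else 0))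
          \<le> (if k - 1 < k then mu' (k - 1) else mu (k - 1) + (if k - 1 = a then 1 else 0)) + l"
        using y2 k r by (auto simp: young_adm_def mu'_def)
    qed
    moreover have "sub_shape l ?u m ! fst (?u ! m) = (\<Sum>x<k. (mu x + l - Suc (mu a mod l)) div l)"
      using sh_phi[OF tc l, of m "mu a mod l"] m' l c by (simp add: fk_def mu_def)
    ultimately show "snd (?u ! m) = sub_shape l ?u m ! fst (?u ! m)"
      using m' c by (simp add: fk_def a_def)
  qed
  show ?thesis unfolding tchar_def using len ya fin cl by auto
qed

lemma step_fn:
  fixes h :: "nat \<Rightarrow> nat"
  assumes k: "0 < k" and anti: "\<And>x y. x \<le> y \<Longrightarrow> y < k \<Longrightarrow> h y \<le> h x"
    and sp: "h 0 \<le> h (k - 1) + 1" and a: "a < k"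
  shows "((\<Sum>x<k. h x) + k - Suc a) div k = h a"
proof -
  define B where "B = h (k - 1)"
  define A where "A = (LEAST x. h x \<le> B)"
  have hA: "h A \<le> B" unfolding A_def by (rule LeastI[of _ "k - 1"]) (simp add: B_def)
  have Ak: "A \<le> k - 1" unfolding A_def by (rule Least_le) (simp add: B_def)
  have hx: "h x = (if x < A then Suc B else B)" if x: "x < k" for x
  proof (cases "x < A")
    case True
    then have "\<not> h x \<le> B" unfolding A_def by (rule not_less_Least)
    moreover have "h x \<le> h 0" using anti[of 0 x] x by simp
    ultimately show ?thesis using True sp by (simp add: B_def)
  next
    case False
    then have "h x \<le> h A" using anti[of A x] x by simp
    moreover have "B \<le> h x" using anti[of x "k - 1"] x by (simp add: B_def)
    ultimately show ?thesis using False hA by simp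
  qed
  have "(\<Sum>x<k. h x) = (\<Sum>x<k. if x < A then Suc B else B)" by (intro sum.cong) (auto simp: hx)
  also have "\<dots> = B * k + A" using Ak k by (intro sum_step) simp
  finally have s: "(\<Sum>x<k. h x) = B * k + A" .
  have "(B * k + A + k - Suc a) div k = (if a < A then Suc B else B)"
    by (rule div_nat_eqI) (use a Ak k in \<open>auto simp: algebra_simps\<close>)
  then show ?thesis using s hx[OF a] by simp
qed

lemma partition_mod: "0 < l \<Longrightarrow> (\<Sum>j<l. (x + l - Suc j) div l) = (x::nat)"
proof -
  assume l: "0 < l"
  have "(\<Sum>j<l. (x + l - Suc j) div l) = (\<Sum>j<l. card {c. c < x \<and> c mod l = j})"
    using cnt_mod[OF l] by simp
  also have "\<dots> = card (\<Union>j<l. {c. c < x \<and> c mod l = j})"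
    by (rule card_UN_disjoint[symmetric]) auto
  also have "(\<Union>j<l. {c. c < x \<and> c mod l = j}) = {..<x}" using l by auto
  finally show ?thesis by simp
qed

lemma rconj_invol:
  assumes ya: "young_adm k r lam" and r: "r = k + l" and k: "0 < k" and l: "0 < l"
  shows "rconj r (rconj r lam) = lam"
proof (rule nth_equalityI)
  have len: "length lam = k" using ya by (simp add: young_adm_def)
  have lenr: "length (rconj r lam) = l" using len r by (simp add: length_rconj)
  show "length (rconj r (rconj r lam)) = length lam" using lenr len r by (simp add: length_rconj)
  fix a assume "a < length (rconj r (rconj r lam))"
  then have a: "a < k" using lenr len r by (simp add: length_rconj)
  have yg: "\<And>x y. x \<le> y \<Longrightarrow> y < k \<Longrightarrow> lam ! y \<le> lam ! x" using ya len
    by (auto simp: young_adm_def young_def)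
  have ad: "lam ! 0 \<le> lam ! (k - 1) + l" using ya k r by (auto simp: young_adm_def)
  have "rconj r (rconj r lam) ! a = (\<Sum>j<l. (rconj r lam ! j + k - Suc a) div k)"
  proof -
    have r2: "r = l + k" using r by simp
    show ?thesis using rconj_nth[OF lenr r2 a] by simp
  qed
  also have "\<dots> = (\<Sum>j<l. (lam ! a + l - Suc j) div l)"
  proof (intro sum.cong refl)
    fix j assume "j \<in> {..<l}"
    then have j: "j < l" by simp
    define h where "h = (\<lambda>x. (lam ! x + l - Suc j) div l)"
    have "rconj r lam ! j = (\<Sum>x<k. h x)" using rconj_nth[OF len r j] by (simp add: h_def)
    moreover have "((\<Sum>x<k. h x) + k - Suc a) div k = h a"
    proof (rule step_fn[OF k _ _ a])
      show "\<And>x y. x \<le> y \<Longrightarrow> y < k \<Longrightarrow> h y \<le> h x"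
        unfolding h_def by (intro div_le_mono diff_le_mono add_le_mono1 yg)
      have "h 0 \<le> (lam ! (k - 1) + l - Suc j + l) div l"
        unfolding h_def by (intro div_le_mono) (use ad j in simp)
      also have "\<dots> = h (k - 1) + 1" using l by (simp add: h_def)
      finally show "h 0 \<le> h (k - 1) + 1" .
    qed
    ultimately show "(rconj r lam ! j + k - Suc a) div k = (lam ! a + l - Suc j) div l"
      by (simp add: h_def)
  qed
  also have "\<dots> = lam ! a" by (rule partition_mod[OF l])
  finally show "rconj r (rconj r lam) ! a = lam ! a" .
qed

lemma fk_inv: "0 < l \<Longrightarrow> fst x < k \<Longrightarrow> fk l k (fk k l x) = x"
  by (cases x) (simp add: fk_def)

lemma map_fk_inv: "0 < l \<Longrightarrow> \<forall>x\<in>set t. fst x < k \<Longrightarrow> map (fk l k) (map (fk k l) t) = t"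
  by (induction t) (auto simp: fk_inv)

lemma tabs_rows: "t \<in> tabs k r lam \<Longrightarrow> length lam = k \<Longrightarrow> \<forall>x\<in>set t. fst x < k"
  using tabs_imp_tchar tchar_facts(4) by (metis in_set_conv_nth)

lemma phi_tabs:
  assumes ya: "young_adm k r lam" and r: "r = k + l" and k: "0 < k" and l: "0 < l"
    and t: "t \<in> tabs k r lam"
  shows "map (fk k l) t \<in> tabs l r (rconj r lam)"
proof -
  have len: "length lam = k" using ya by (simp add: young_adm_def)
  have "tchar k r lam t" using tabs_imp_tchar[OF len t] .
  then have "tchar l r (rconj r lam) (map (fk k l) t)" using phi_tchar l k r by blast
  then show ?thesis by (rule tchar_imp_tabs)
qed

lemma psi_tabs:
  assumes ya: "young_adm k r lam" and r: "r = k + l" and k: "0 < k" and l: "0 < l"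
    and u: "u \<in> tabs l r (rconj r lam)"
  shows "map (fk l k) u \<in> tabs k r lam" "map (fk k l) (map (fk l k) u) = u"
proof -
  have len: "length lam = k" using ya by (simp add: young_adm_def)
  have ya2: "young_adm l r (rconj r lam)" by (rule rconj_adm[OF ya r l])
  have r2: "r = l + k" using r by simp
  have "map (fk l k) u \<in> tabs k r (rconj r (rconj r lam))"
    by (rule phi_tabs[OF ya2 r2 l k u])
  then show "map (fk l k) u \<in> tabs k r lam" using rconj_invol[OF ya r k l] by simp
  have "\<forall>x\<in>set u. fst x < l" using tabs_rows[OF u] ya2 by (simp add: young_adm_def)
  then show "map (fk k l) (map (fk l k) u) = u" using map_fk_inv[OF k] by blast
qed

lemma swp_nth: "Suc m < length t \<Longrightarrow> swp (Suc m) t ! x =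
   (if x = m then t ! Suc m else if x = Suc m then t ! m else t ! x)"
  by (simp add: swp_def nth_list_update)

lemma length_swp[simp]: "length (swp i t) = length t"
  by (simp add: swp_def)

lemma sh_prefix_eq: "(\<And>x. x < p \<Longrightarrow> fst (t' ! x) = fst (t ! x)) \<Longrightarrow> sub_shape k t' p = sub_shape k t p"
  unfolding sub_shape_def by (intro map_cong refl arg_cong[where f = card]) auto

lemma sh_swp_late:
  assumes m: "Suc m < length t" and p: "Suc (Suc m) \<le> p"
  shows "sub_shape k (swp (Suc m) t) p = sub_shape k t p"
proof -
  define sg where "sg = (\<lambda>x. if x = m then Suc m else if x = Suc m then m else x)"
  have sgi: "sg (sg x) = x" for x by (simp add: sg_def)
  have inj: "inj_on sg A" for A by (metis inj_on_inverseI sgi)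
  show ?thesis unfolding sub_shape_def
  proof (intro map_cong refl)
    fix a
    have "{x. x < p \<and> fst (swp (Suc m) t ! x) = a} = sg ` {x. x < p \<and> fst (t ! x) = a}"
    proof (cases "p \<le> length t")
      case True
      have e: "x < p \<Longrightarrow> swp (Suc m) t ! x = t ! sg x" for x
        using swp_nth[OF m, of x] True by (auto simp: sg_def)
      have lt: "x < p \<longleftrightarrow> sg x < p" for x using p by (auto simp: sg_def)
      show ?thesis
      proof (intro set_eqI iffI)
        fix x assume "x \<in> {x. x < p \<and> fst (swp (Suc m) t ! x) = a}"
        then show "x \<in> sg ` {x. x < p \<and> fst (t ! x) = a}"
          using e[of x] lt[of x] sgi[of x] by (auto intro!: image_eqI[of _ _ "sg x"])
      next
        fix x assume "x \<in> sg ` {x. x < p \<and> fst (t ! x) = a}"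
        then obtain y where "x = sg y" "y < p" "fst (t ! y) = a" by auto
        then show "x \<in> {x. x < p \<and> fst (swp (Suc m) t ! x) = a}"
          using e[of x] lt[of y] sgi[of y] by auto
      qed
    next
      case False
      have e: "swp (Suc m) t ! x = t ! sg x" for x
        using m by (cases "x < length t") (auto simp: sg_def swp_def nth_list_update)
      have lt: "x < p \<longleftrightarrow> sg x < p" for x using p by (auto simp: sg_def)
      show ?thesis
      proof (intro set_eqI iffI)
        fix x assume "x \<in> {x. x < p \<and> fst (swp (Suc m) t ! x) = a}"
        then show "x \<in> sg ` {x. x < p \<and> fst (t ! x) = a}"
          using e[of x] lt[of x] sgi[of x] by (auto intro!: image_eqI[of _ _ "sg x"])
      next
        fix x assume "x \<in> sg ` {x. x < p \<and> fst (t ! x) = a}"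
        then obtain y where "x = sg y" "y < p" "fst (t ! y) = a" by auto
        then show "x \<in> {x. x < p \<and> fst (swp (Suc m) t ! x) = a}"
          using e[of x] lt[of y] sgi[of y] by auto
      qed
    qed
    then show "card {x. x < p \<and> fst (swp (Suc m) t ! x) = a} = card {x. x < p \<and> fst (t ! x) = a}"
      using card_image[OF inj] by simp
  qed
qed

lemma tchar_step:
  assumes tc: "tchar k r lam t" and m: "Suc m < length t"
  obtains a1 c1 a2 c2 where "t ! m = (a1, c1)" "t ! Suc m = (a2, c2)" "a1 < k" "a2 < k"
    "c1 = sub_shape k t m ! a1" "c2 = sub_shape k t m ! a2 + (if a1 = a2 then 1 else 0)"
    "\<And>x. x < k \<Longrightarrow> sub_shape k t (Suc m) ! x = sub_shape k t m ! x + (if x = a1 then 1 else 0)"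
    "\<And>x. x < k \<Longrightarrow> sub_shape k t (Suc (Suc m)) ! x = sub_shape k t m ! x + (if x = a1 then 1 else 0)
        + (if x = a2 then 1 else 0)"
proof -
  note tf = tchar_facts[OF tc]
  obtain a1 c1 where 1: "t ! m = (a1, c1)" by fastforce
  obtain a2 c2 where 2: "t ! Suc m = (a2, c2)" by fastforce
  have a1: "a1 < k" using tf(4)[of m] m 1 by simp
  have a2: "a2 < k" using tf(4)[of "Suc m"] m 2 by simp
  have s1: "sub_shape k t (Suc m) ! x = sub_shape k t m ! x + (if x = a1 then 1 else 0)" if "x < k" for x
    using sh_Suc[OF that, of t m] 1 by (auto)
  have s2: "sub_shape k t (Suc (Suc m)) ! x = sub_shape k t m ! x + (if x = a1 then 1 else 0)
        + (if x = a2 then 1 else 0)" if "x < k" for x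
    using sh_Suc[OF that, of t "Suc m"] s1[OF that] 2 by (auto)
  have "c1 = sub_shape k t m ! a1" using tf(5)[of m] m 1 by simp
  moreover have "c2 = sub_shape k t m ! a2 + (if a1 = a2 then 1 else 0)"
    using tf(5)[of "Suc m"] m 2 s1[OF a2] by auto
  ultimately show ?thesis using that 1 2 a1 a2 s1 s2 by blast
qed

lemma young_admD:
  assumes "young_adm k r mu" "0 < k"
  shows "\<And>x y. x \<le> y \<Longrightarrow> y < k \<Longrightarrow> mu ! y \<le> mu ! x" "mu ! 0 \<le> mu ! (k - 1) + (r - k)"
    "length mu = k"
  using assms by (auto simp: young_adm_def young_def)

lemma d_range:
  assumes tc: "tchar k r lam t" and r: "r = k + l" and k: "0 < k" and l: "0 < l" and m: "Suc m < length t"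
  shows "dist t (Suc m) (Suc (Suc m)) \<noteq> 0 \<and> \<bar>dist t (Suc m) (Suc (Suc m))\<bar> \<le> int r - 1"
proof -
  note tf = tchar_facts[OF tc]
  obtain a1 c1 a2 c2 where t1: "t ! m = (a1, c1)" and t2: "t ! Suc m = (a2, c2)" and a: "a1 < k" "a2 < k"
    and c1: "c1 = sub_shape k t m ! a1" and c2: "c2 = sub_shape k t m ! a2 + (if a1 = a2 then 1 else 0)"
    using tchar_step[OF tc m] by metis
  define mu where "mu = sub_shape k t m"
  have ya: "young_adm k r mu" using tf(2)[of m] m by (simp add: mu_def)
  note yd = young_admD[OF ya k]
  have d: "dist t (Suc m) (Suc (Suc m)) = (int c1 - int c2) - (int a1 - int a2)"
    using t1 t2 by (simp add: dist_def)
  have b0: "mu ! 0 \<le> mu ! (k - 1) + l" using yd(2) r by simp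
  consider "a1 = a2" | "a1 < a2" | "a2 < a1" by linarith
  then show ?thesis
  proof cases
    case 1 then show ?thesis using d c1 c2 r k l by simp
  next
    case 2
    have "mu ! a2 \<le> mu ! a1" using yd(1)[of a1 a2] 2 a by simp
    moreover have "mu ! a1 \<le> mu ! 0" using yd(1)[of 0 a1] a by simp
    moreover have "mu ! (k - 1) \<le> mu ! a2" using yd(1)[of a2 "k - 1"] a by simp
    ultimately show ?thesis using d c1 c2 2 a b0 r unfolding mu_def by auto
  next
    case 3
    have "mu ! a1 \<le> mu ! a2" using yd(1)[of a2 a1] 3 a by simp
    moreover have "mu ! a2 \<le> mu ! 0" using yd(1)[of 0 a2] a by simp
    moreover have "mu ! (k - 1) \<le> mu ! a1" using yd(1)[of a1 "k - 1"] a by simp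
    ultimately show ?thesis using d c1 c2 3 a b0 r unfolding mu_def by auto
  qed
qed

lemma swp_in:
  assumes tc: "tchar k r lam t" and r: "r = k + l" and k: "0 < k" and l: "0 < l" and m: "Suc m < length t"
    and dn: "dist t (Suc m) (Suc (Suc m)) \<notin> {1, -1, 1 - int r}"
  shows "tchar k r lam (swp (Suc m) t)"
proof -
  note tf = tchar_facts[OF tc]
  obtain a1 c1 a2 c2 where t1: "t ! m = (a1, c1)" and t2: "t ! Suc m = (a2, c2)" and a: "a1 < k" "a2 < k"
    and c1: "c1 = sub_shape k t m ! a1" and c2: "c2 = sub_shape k t m ! a2 + (if a1 = a2 then 1 else 0)"
    and s1: "\<And>x. x < k \<Longrightarrow> sub_shape k t (Suc m) ! x = sub_shape k t m ! x + (if x = a1 then 1 else 0)"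
    and s2: "\<And>x. x < k \<Longrightarrow> sub_shape k t (Suc (Suc m)) ! x = sub_shape k t m ! x + (if x = a1 then 1 else 0)
        + (if x = a2 then 1 else 0)"
    using tchar_step[OF tc m] by metis
  define mu where "mu = sub_shape k t m"
  define t' where "t' = swp (Suc m) t"
  have d: "dist t (Suc m) (Suc (Suc m)) = (int c1 - int c2) - (int a1 - int a2)"
    using t1 t2 by (simp add: dist_def)
  have a12: "a1 \<noteq> a2" using d dn c2 c1 by auto
  have c2': "c2 = mu ! a2" using c2 a12 by (simp add: mu_def)
  have c1': "c1 = mu ! a1" using c1 by (simp add: mu_def)
  have lt': "length t' = length t" by (simp add: t'_def)
  have t'n: "t' ! x = (if x = m then t ! Suc m else if x = Suc m then t ! m else t ! x)" for x
    unfolding t'_def using swp_nth[OF m] by simp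
  have early: "sub_shape k t' p = sub_shape k t p" if "p \<le> m" for p
    using that by (intro sh_prefix_eq) (simp add: t'n)
  have late: "sub_shape k t' p = sub_shape k t p" if "Suc (Suc m) \<le> p" for p
    unfolding t'_def using sh_swp_late[OF m that] .
  define nu where "nu = sub_shape k t' (Suc m)"
  have nu: "nu ! x = mu ! x + (if x = a2 then 1 else 0)" if "x < k" for x
    using sh_Suc[OF that, of t' m] early[of m] t'n[of m] t2 by (simp add: nu_def mu_def)
  have ymu: "young_adm k r mu" using tf(2)[of m] m by (simp add: mu_def)
  have y1: "young_adm k r (sub_shape k t (Suc m))" using tf(2)[of "Suc m"] m by simp
  have y2: "young_adm k r (sub_shape k t (Suc (Suc m)))" using tf(2)[of "Suc (Suc m)"] m by simp
  note ym = young_admD[OF ymu k] and yy2 = young_admD[OF y2 k]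
  have ynu: "young_adm k r nu"
  proof -
    have len: "length nu = k" by (simp add: nu_def)
    have yg: "nu ! y \<le> nu ! x" if xy: "x \<le> y" "y < k" for x y
    proof (cases "y = a2 \<and> x \<noteq> y")
      case False
      then show ?thesis using nu[of x] nu[of y] ym(1)[OF xy] xy by auto
    next
      case True
      then have xa: "x < a2" using xy by simp
      show ?thesis
      proof (rule ccontr)
        assume "\<not> nu ! y \<le> nu ! x"
        then have "mu ! x \<le> mu ! a2" using nu[of x] nu[of y] True xy by auto
        then have eq: "mu ! x = mu ! a2" using ym(1)[of x a2] xa a by simp
        have "sub_shape k t (Suc (Suc m)) ! a2 \<le> sub_shape k t (Suc (Suc m)) ! x"
          using yy2(1)[of x a2] xa a by simp
        then have xa1: "x = a1" using s2[of a2] s2[of x] a xa a12 eq by (auto split: if_splits simp: mu_def)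
        show False
        proof (cases "a2 = Suc a1")
          case True
          then have "dist t (Suc m) (Suc (Suc m)) = 1" using d c1' c2' eq xa1 by simp
          then show False using dn by simp
        next
          case False
          define z where "z = Suc a1"
          have z: "a1 < z" "z < a2" using False xa xa1 by (auto simp: z_def)
          have "sub_shape k t (Suc (Suc m)) ! a2 \<le> sub_shape k t (Suc (Suc m)) ! z"
            using yy2(1)[of z a2] z a by simp
          then have "mu ! a2 + 1 \<le> mu ! z" using s2[of a2] s2[of z] z a a12 by (auto simp: mu_def)
          moreover have "mu ! z \<le> mu ! a1" using ym(1)[of a1 z] z a by simp
          ultimately show False using eq xa1 by simp
        qed
      qed
    qed
    have ad: "nu ! 0 - nu ! (k - 1) \<le> r - k"
    proof (cases "a2 = 0 \<and> k - 1 \<noteq> 0")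
      case False
      then show ?thesis using nu[of 0] nu[of "k - 1"] ym(2) k by auto
    next
      case True
      have b2: "sub_shape k t (Suc (Suc m)) ! 0 \<le> sub_shape k t (Suc (Suc m)) ! (k - 1) + (r - k)"
        using yy2(2) .
      show ?thesis
      proof (cases "a1 = k - 1")
        case False
        have e1: "nu ! 0 = mu ! 0 + 1" "nu ! (k - 1) = mu ! (k - 1)" using nu[of 0] nu[of "k - 1"] k True by auto
        have e2: "sub_shape k t (Suc (Suc m)) ! 0 = mu ! 0 + 1"
          "sub_shape k t (Suc (Suc m)) ! (k - 1) = mu ! (k - 1)"
          using s2[of 0] s2[of "k - 1"] k True False a12 by (auto simp: mu_def)
        show ?thesis using b2 e1 e2 by linarith
      next
        case a1k: True
        show ?thesis
        proof (rule ccontr)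
          assume "\<not> nu ! 0 - nu ! (k - 1) \<le> r - k"
          then have "mu ! 0 = mu ! (k - 1) + (r - k)"
            using nu[of 0] nu[of "k - 1"] ym(2) k True a1k by (simp; linarith)
          then have "dist t (Suc m) (Suc (Suc m)) = 1 - int r"
            using d c1' c2' True a1k r k by simp
          then show False using dn by simp
        qed
      qed
    qed
    show ?thesis unfolding young_adm_def young_def using len yg ad by auto
  qed
  have ya': "young_adm k r (sub_shape k t' p)" if "p \<le> length t'" for p
  proof -
    consider "p \<le> m" | "p = Suc m" | "Suc (Suc m) \<le> p" by linarith
    then show ?thesis
    proof cases
      case 1 then show ?thesis using early[OF 1] tf(2)[of p] that lt' by simp
    next
      case 2 then show ?thesis using ynu by (simp add: nu_def)
    next
      case 3 then show ?thesis using late[OF 3] tf(2)[of p] that lt' by simp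
    qed
  qed
  have fin: "sub_shape k t' (length t') = lam" using late[of "length t'"] lt' m tf(3) by simp
  have cl: "fst (t' ! x) < k \<and> snd (t' ! x) = sub_shape k t' x ! fst (t' ! x)" if x: "x < length t'" for x
  proof -
    consider "x < m" | "x = m" | "x = Suc m" | "Suc (Suc m) \<le> x" by linarith
    then show ?thesis
    proof cases
      case 1 then show ?thesis using early[of x] t'n[of x] tf(4)[of x] tf(5)[of x] x lt' by simp
    next
      case 2 then show ?thesis using early[of m] t'n[of m] t2 a c2' by (simp add: mu_def)
    next
      case 3
      have "sub_shape k t' (Suc m) ! a1 = mu ! a1" using nu[of a1] a a12 by (simp add: nu_def)
      then show ?thesis using 3 t'n[of "Suc m"] t1 a c1' by simp
    next
      case 4 then show ?thesis using late[of x] t'n[of x] tf(4)[of x] tf(5)[of x] x lt' by simp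
    qed
  qed
  show ?thesis unfolding tchar_def t'_def[symmetric] using tf(1) ya' fin cl by blast
qed

lemma swp_eq: "swp (Suc m) t = t[m := t ! Suc m, Suc m := t ! m]"
  by (simp add: swp_def)

lemma map_swp: "Suc m < length t \<Longrightarrow> map f (swp (Suc m) t) = swp (Suc m) (map f t)"
  by (simp add: swp_eq map_update)

lemma swp_swp: "Suc m < length t \<Longrightarrow> swp (Suc m) (swp (Suc m) t) = t"
  by (intro nth_equalityI) (auto simp: swp_nth)

lemma swp_neq: "Suc m < length t \<Longrightarrow> distinct t \<Longrightarrow> swp (Suc m) t \<noteq> t"
proof
  assume h: "Suc m < length t" "distinct t" "swp (Suc m) t = t"
  then have "swp (Suc m) t ! m = t ! m" by simp
  then have "t ! Suc m = t ! m" using swp_nth[OF h(1), of m] by simp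
  then show False using h(1,2) by (simp add: nth_eq_iff_index_eq)
qed

lemma dist_swp: "Suc m < length t \<Longrightarrow>
   dist (swp (Suc m) t) (Suc m) (Suc (Suc m)) = - dist t (Suc m) (Suc (Suc m))"
  by (simp add: dist_def swp_nth)

lemma dist_phi:
  assumes m: "Suc m < length t" and l: "0 < l"
  shows "\<exists>j. dist (map (fk k l) t) (Suc m) (Suc (Suc m)) = int (k + l) * j - dist t (Suc m) (Suc (Suc m))"
proof -
  obtain a1 c1 where 1: "t ! m = (a1, c1)" by fastforce
  obtain a2 c2 where 2: "t ! Suc m = (a2, c2)" by fastforce
  have e1: "int c1 = int (c1 div l) * int l + int (c1 mod l)" by (simp flip: of_nat_mult of_nat_add)
  have e2: "int c2 = int (c2 div l) * int l + int (c2 mod l)" by (simp flip: of_nat_mult of_nat_add)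
  show ?thesis
  proof (intro exI[of _ "int (c1 div l) - int (c2 div l)"])
    show "dist (map (fk k l) t) (Suc m) (Suc (Suc m)) = int (k + l) * (int (c1 div l) - int (c2 div l)) - dist t (Suc m) (Suc (Suc m))"
      using m 1 2 e1 e2 by (simp add: dist_def fk_def algebra_simps)
  qed
qed

definition lexlt :: "nat \<times> nat \<Rightarrow> nat \<times> nat \<Rightarrow> bool" where
  "lexlt x y = (fst x < fst y \<or> (fst x = fst y \<and> snd x < snd y))"

fun invs :: "(nat \<times> nat) list \<Rightarrow> nat" where
  "invs [] = 0"
| "invs (x # xs) = length (filter (\<lambda>y. lexlt y x) xs) + invs xs"

lemma length_filter_mset_eq: "mset xs = mset ys \<Longrightarrow> length (filter P xs) = length (filter P ys)"
  by (metis mset_filter size_mset)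

lemma invs_swap: "Suc m < length t \<Longrightarrow> t ! m \<noteq> t ! Suc m \<Longrightarrow>
   odd (invs (t[m := t ! Suc m, Suc m := t ! m]) + invs t)"
proof (induction m arbitrary: t)
  case 0
  from 0(1) obtain x xs where t0: "t = x # xs" by (cases t) auto
  with 0(1) obtain y zs where "xs = y # zs" by (cases xs) auto
  with t0 have t: "t = x # y # zs" by simp
  have xy: "x \<noteq> y" using 0 t by simp
  have ex: "lexlt x y \<longleftrightarrow> \<not> lexlt y x" using xy by (auto simp: lexlt_def prod_eq_iff)
  show ?case using ex t by auto
next
  case (Suc m)
  then obtain x xs where t: "t = x # xs" by (cases t) auto
  have m: "Suc m < length xs" and ne: "xs ! m \<noteq> xs ! Suc m" using Suc.prems t by auto
  have ms: "mset (xs[m := xs ! Suc m, Suc m := xs ! m]) = mset xs" using mset_swap[of "Suc m" xs m] m by simp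
  have "odd (invs (xs[m := xs ! Suc m, Suc m := xs ! m]) + invs xs)" using Suc.IH[OF m ne] .
  then show ?case using t length_filter_mset_eq[OF ms, of "\<lambda>y. lexlt y x"] by simp
qed

definition eps :: "(nat \<times> nat) list \<Rightarrow> complex" where
  "eps t = (-1) ^ invs t"

lemma eps_swp: "Suc m < length t \<Longrightarrow> distinct t \<Longrightarrow> eps (swp (Suc m) t) = - eps t"
proof -
  assume h: "Suc m < length t" "distinct t"
  have "t ! m \<noteq> t ! Suc m" using h by (simp add: nth_eq_iff_index_eq)
  then have "odd (invs (swp (Suc m) t) + invs t)" using invs_swap h by (simp add: swp_eq)
  then show ?thesis unfolding eps_def by (simp add: minus_one_power_iff)
qed

lemma eps_sq: "eps t * eps t = 1"
  unfolding eps_def by (simp add: minus_one_power_iff)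

definition delta :: "'a \<Rightarrow> 'a \<Rightarrow> complex" where
  "delta u w = (if u = w then 1 else 0)"

lemma sum_delta_left: "finite S \<Longrightarrow> u \<in> S \<Longrightarrow> (\<Sum>v\<in>S. delta u v * f v) = f u"
  by (simp add: delta_def if_distrib[where f = "\<lambda>x. x * _"] sum.delta cong: if_cong)

lemma sum_delta_right: "finite S \<Longrightarrow> w \<in> S \<Longrightarrow> (\<Sum>v\<in>S. f v * delta v w) = f w"
proof -
  assume h: "finite S" "w \<in> S"
  have "\<And>v. f v * delta v w = (if v = w then f w else 0)" by (simp add: delta_def)
  then show ?thesis using h by (simp add: sum.delta')
qed

lemma mat_inv_unique:
  assumes fin: "finite S"
    and z: "\<And>u v. u \<notin> S \<or> v \<notin> S \<Longrightarrow> B u v = 0"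
    and left: "\<And>u w. u \<in> S \<Longrightarrow> w \<in> S \<Longrightarrow> (\<Sum>v\<in>S. B u v * A v w) = delta u w"
    and right: "\<And>u w. u \<in> S \<Longrightarrow> w \<in> S \<Longrightarrow> (\<Sum>v\<in>S. A u v * B v w) = delta u w"
  shows "mat_inv S A = B"
  unfolding mat_inv_def
proof (rule the_equality)
  show "(\<forall>u v. u \<notin> S \<or> v \<notin> S \<longrightarrow> B u v = 0) \<and>
    (\<forall>u\<in>S. \<forall>w\<in>S. (\<Sum>v\<in>S. B u v * A v w) = (if u = w then 1 else 0)) \<and>
    (\<forall>u\<in>S. \<forall>w\<in>S. (\<Sum>v\<in>S. A u v * B v w) = (if u = w then 1 else 0))"
    using z left right by (simp add: delta_def)
next
  fix B' assume h: "(\<forall>u v. u \<notin> S \<or> v \<notin> S \<longrightarrow> B' u v = 0) \<and>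
    (\<forall>u\<in>S. \<forall>w\<in>S. (\<Sum>v\<in>S. B' u v * A v w) = (if u = w then 1 else 0)) \<and>
    (\<forall>u\<in>S. \<forall>w\<in>S. (\<Sum>v\<in>S. A u v * B' v w) = (if u = w then 1 else 0))"
  have l': "\<And>u w. u \<in> S \<Longrightarrow> w \<in> S \<Longrightarrow> (\<Sum>v\<in>S. B' u v * A v w) = delta u w"
    using h by (simp add: delta_def)
  show "B' = B"
  proof (intro ext)
    fix u w
    show "B' u w = B u w"
    proof (cases "u \<in> S \<and> w \<in> S")
      case False then show ?thesis using h z by auto
    next
      case True
      have "B' u w = (\<Sum>v\<in>S. B' u v * delta v w)" using sum_delta_right[OF fin, of w "B' u"] True by simp
      also have "\<dots> = (\<Sum>v\<in>S. B' u v * (\<Sum>x\<in>S. A v x * B x w))" using right True by simp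
      also have "\<dots> = (\<Sum>v\<in>S. \<Sum>x\<in>S. B' u v * A v x * B x w)"
        by (simp add: sum_distrib_left mult.assoc)
      also have "\<dots> = (\<Sum>x\<in>S. \<Sum>v\<in>S. B' u v * A v x * B x w)" by (rule sum.swap)
      also have "\<dots> = (\<Sum>x\<in>S. (\<Sum>v\<in>S. B' u v * A v x) * B x w)" by (simp add: sum_distrib_right)
      also have "\<dots> = (\<Sum>x\<in>S. delta u x * B x w)" using l' True by simp
      also have "\<dots> = B u w" using sum_delta_left[OF fin] True by simp
      finally show ?thesis .
    qed
  qed
qed

locale erow =
  fixes S :: "'a set" and E :: "'a \<Rightarrow> 'a \<Rightarrow> complex" and sw :: "'a \<Rightarrow> 'a"
    and al be :: "'a \<Rightarrow> complex"
  assumes fin: "finite S"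
    and Eeq: "\<And>u v. u \<in> S \<Longrightarrow> v \<in> S \<Longrightarrow>
       E u v = (if v = u then al u else 0) + (if sw u \<in> S \<and> v = sw u then be u else 0)"
    and swne: "\<And>u. u \<in> S \<Longrightarrow> sw u \<noteq> u"
    and swsw: "\<And>u. u \<in> S \<Longrightarrow> sw u \<in> S \<Longrightarrow> sw (sw u) = u"
    and alsw: "\<And>u. u \<in> S \<Longrightarrow> sw u \<in> S \<Longrightarrow> al (sw u) = 1 - al u"
    and besw: "\<And>u. u \<in> S \<Longrightarrow> sw u \<in> S \<Longrightarrow> be (sw u) = be u"
    and besq: "\<And>u. u \<in> S \<Longrightarrow> sw u \<in> S \<Longrightarrow> be u * be u = al u * (1 - al u)"
    and alsq: "\<And>u. u \<in> S \<Longrightarrow> sw u \<notin> S \<Longrightarrow> al u * al u = al u"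
begin

lemma row_sum: "u \<in> S \<Longrightarrow> (\<Sum>v\<in>S. E u v * X v) = al u * X u + (if sw u \<in> S then be u * X (sw u) else 0)"
proof -
  assume u: "u \<in> S"
  have "(\<Sum>v\<in>S. E u v * X v) = (\<Sum>v\<in>S. (if v = u then al u * X v else 0) +
       (if sw u \<in> S \<and> v = sw u then be u * X v else 0))"
    by (intro sum.cong refl) (simp add: Eeq u distrib_right)
  also have "\<dots> = (\<Sum>v\<in>S. if v = u then al u * X u else 0) +
       (\<Sum>v\<in>S. if sw u \<in> S \<and> v = sw u then be u * X (sw u) else 0)"
    by (simp add: sum.distrib cong: if_cong)
  also have "(\<Sum>v\<in>S. if v = u then al u * X u else 0) = al u * X u"
    using u fin by (simp add: sum.delta')
  also have "(\<Sum>v\<in>S. if sw u \<in> S \<and> v = sw u then be u * X (sw u) else 0) =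
      (if sw u \<in> S then be u * X (sw u) else 0)"
    using fin by (cases "sw u \<in> S") (simp_all add: sum.delta')
  finally show ?thesis .
qed

lemma idem: "u \<in> S \<Longrightarrow> w \<in> S \<Longrightarrow> (\<Sum>v\<in>S. E u v * E v w) = E u w"
proof -
  assume u: "u \<in> S" and w: "w \<in> S"
  have "(\<Sum>v\<in>S. E u v * E v w) = al u * E u w + (if sw u \<in> S then be u * E (sw u) w else 0)"
    using row_sum[OF u] .
  also have "\<dots> = E u w"
  proof (cases "sw u \<in> S")
    case True
    have e1: "E u w = (if w = u then al u else 0) + (if w = sw u then be u else 0)" using Eeq[OF u w] True by simp
    have ne: "sw u \<noteq> u" using swne u by simp
    have e2: "E (sw u) w = (if w = sw u then 1 - al u else 0) + (if w = u then be u else 0)"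
      using Eeq[OF True w] swsw[OF u True] alsw[OF u True] besw[OF u True] u ne by simp
    consider "w = u" | "w = sw u" | "w \<noteq> u \<and> w \<noteq> sw u" by blast
    then show ?thesis
    proof cases
      case 1
      then have x: "E u w = al u" "E (sw u) w = be u" using e1 e2 ne by auto
      show ?thesis unfolding x using True besq[OF u True] by (simp add: algebra_simps)
    next
      case 2
      then have x: "E u w = be u" "E (sw u) w = 1 - al u" using e1 e2 ne by auto
      show ?thesis unfolding x using True by (simp add: algebra_simps)
    next
      case 3
      then have "E u w = 0" "E (sw u) w = 0" using e1 e2 by auto
      then show ?thesis using True by simp
    qed
  next
    case False
    have e1: "E u w = (if w = u then al u else 0)" using Eeq[OF u w] False by auto
    show ?thesis using False e1 alsq[OF u False] by simp
  qed
  finally show ?thesis .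
qed

lemma inv_formula:
  fixes q :: complex
  assumes q: "q \<noteq> 0"
  defines "R \<equiv> (\<lambda>u w. q * delta u w - (1 + q) * E u w)"
  defines "B \<equiv> (\<lambda>u w. if u \<in> S \<and> w \<in> S then (delta u w - (1 + q) * E u w) / q else 0)"
  shows "mat_inv S R = B"
proof (rule mat_inv_unique[OF fin])
  show "\<And>u v. u \<notin> S \<or> v \<notin> S \<Longrightarrow> B u v = 0" by (auto simp: B_def)
next
  fix u w assume u: "u \<in> S" and w: "w \<in> S"
  have key: "(\<Sum>v\<in>S. (delta u v - (1 + q) * E u v) * (q * delta v w - (1 + q) * E v w)) = q * delta u w"
  proof -
    have "(\<Sum>v\<in>S. (delta u v - (1 + q) * E u v) * (q * delta v w - (1 + q) * E v w)) =
        q * (\<Sum>v\<in>S. delta u v * delta v w) - (1 + q) * (\<Sum>v\<in>S. delta u v * E v w)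
        - q * (1 + q) * (\<Sum>v\<in>S. E u v * delta v w) + (1 + q) * (1 + q) * (\<Sum>v\<in>S. E u v * E v w)"
      by (simp add: algebra_simps sum.distrib sum_subtractf sum_distrib_left)
    also have "\<dots> = q * delta u w - (1 + q) * E u w - q * (1 + q) * E u w + (1 + q) * (1 + q) * E u w"
      using sum_delta_left[OF fin u] sum_delta_right[OF fin w] idem[OF u w] by simp
    also have "\<dots> = q * delta u w" by (simp add: algebra_simps)
    finally show ?thesis .
  qed
  have "(\<Sum>v\<in>S. B u v * R v w) = (\<Sum>v\<in>S. (delta u v - (1 + q) * E u v) * (q * delta v w - (1 + q) * E v w)) / q"
    by (simp add: B_def R_def u sum_divide_distrib)
  also have "\<dots> = delta u w" using key q by simp
  finally show "(\<Sum>v\<in>S. B u v * R v w) = delta u w" .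
  have key2: "(\<Sum>v\<in>S. (q * delta u v - (1 + q) * E u v) * (delta v w - (1 + q) * E v w)) = q * delta u w"
  proof -
    have "(\<Sum>v\<in>S. (q * delta u v - (1 + q) * E u v) * (delta v w - (1 + q) * E v w)) =
        q * (\<Sum>v\<in>S. delta u v * delta v w) - q * (1 + q) * (\<Sum>v\<in>S. delta u v * E v w)
        - (1 + q) * (\<Sum>v\<in>S. E u v * delta v w) + (1 + q) * (1 + q) * (\<Sum>v\<in>S. E u v * E v w)"
      by (simp add: algebra_simps sum.distrib sum_subtractf sum_distrib_left)
    also have "\<dots> = q * delta u w - q * (1 + q) * E u w - (1 + q) * E u w + (1 + q) * (1 + q) * E u w"
      using sum_delta_left[OF fin u] sum_delta_right[OF fin w] idem[OF u w] by simp
    also have "\<dots> = q * delta u w" by (simp add: algebra_simps)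
    finally show ?thesis .
  qed
  have "(\<Sum>v\<in>S. R u v * B v w) = (\<Sum>v\<in>S. (q * delta u v - (1 + q) * E u v) * (delta v w - (1 + q) * E v w)) / q"
    by (simp add: B_def R_def w sum_divide_distrib)
  also have "\<dots> = delta u w" using key2 q by simp
  finally show "(\<Sum>v\<in>S. R u v * B v w) = delta u w" .
qed

end

locale jws =
  fixes r k l :: nat and s :: complex and lam :: "nat list"
  assumes r3: "r \<ge> 3"
    and sdef: "s = exp (complex_of_real pi * \<i> / of_nat r) \<or> s = exp (- complex_of_real pi * \<i> / of_nat r)"
    and k: "0 < k" and l: "0 < l" and rkl: "r = k + l"
    and ya: "young_adm k r lam"
begin

abbreviation "S1 \<equiv> tabs k r lam"
abbreviation "nu \<equiv> rconj r lam"
abbreviation "S2 \<equiv> tabs l r nu"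
abbreviation "phi \<equiv> map (fk k l)"
abbreviation "psi \<equiv> map (fk l k)"
abbreviation "n \<equiv> sum_list lam"

lemma lenlam: "length lam = k" using ya by (simp add: young_adm_def)
lemma ya2: "young_adm l r nu" using rconj_adm[OF ya rkl l] .
lemma lennu: "length nu = l" using ya2 by (simp add: young_adm_def)

lemma S1_facts: assumes t: "t \<in> S1" shows "length t = n" "distinct t" "tchar k r lam t" "\<forall>x\<in>set t. fst x < k"
proof -
  have st: "standard_tableau lam t" using t by (simp add: tabs_def)
  show "length t = n" using st unfolding standard_tableau_def by (elim conjE)
  show "distinct t" using st unfolding standard_tableau_def by (elim conjE)
  show "tchar k r lam t" using tabs_imp_tchar[OF lenlam t] .
  show "\<forall>x\<in>set t. fst x < k" using tabs_rows[OF t lenlam] .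
qed

lemma S2_len: "u \<in> S2 \<Longrightarrow> length u = n"
proof -
  assume "u \<in> S2"
  then have "psi u \<in> S1" using psi_tabs[OF ya rkl k l] by blast
  then have "length (psi u) = n" by (rule S1_facts(1))
  then show ?thesis by simp
qed

lemma finite_tabs: "finite (tabs k' r' mu)"
proof -
  have "tabs k' r' mu \<subseteq> {t. set t \<subseteq> boxes mu \<and> length t = sum_list mu}"
    by (auto simp: tabs_def standard_tableau_def)
  moreover have "finite {t. set t \<subseteq> boxes mu \<and> length t = sum_list mu}"
    by (rule finite_lists_length_eq[OF finite_boxes])
  ultimately show ?thesis by (rule finite_subset)
qed

lemma phi_in: "t \<in> S1 \<Longrightarrow> phi t \<in> S2" using phi_tabs[OF ya rkl k l] .
lemma psi_in: "u \<in> S2 \<Longrightarrow> psi u \<in> S1" using psi_tabs[OF ya rkl k l] by blast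
lemma phi_psi: "u \<in> S2 \<Longrightarrow> phi (psi u) = u" using psi_tabs[OF ya rkl k l] by blast
lemma psi_phi: "\<forall>x\<in>set t. fst x < k \<Longrightarrow> psi (phi t) = t" using map_fk_inv[OF l] by blast

lemma phi_inj: "t \<in> S1 \<Longrightarrow> t' \<in> S1 \<Longrightarrow> phi t = phi t' \<longleftrightarrow> t = t'"
proof
  assume t: "t \<in> S1" "t' \<in> S1" and e: "phi t = phi t'"
  have "t = psi (phi t)" using psi_phi[OF S1_facts(4)[OF t(1)]] by simp
  also have "\<dots> = psi (phi t')" using e by simp
  also have "\<dots> = t'" using psi_phi[OF S1_facts(4)[OF t(2)]] by simp
  finally show "t = t'" .
qed simp

lemma s_ne0: "s \<noteq> 0" using sdef by auto

lemma alpha_eq: "alpha s t i = of_real (Ar r (dist t i (Suc i)))"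
  unfolding alpha_def Ar_def Let_def using qint_eq[OF r3 sdef] by simp

lemma beta_eq: "beta s t i = of_real (sqrt (Ar r (dist t i (Suc i)) * (1 - Ar r (dist t i (Suc i)))))"
proof -
  have "alpha s t i * (1 - alpha s t i) = of_real (Ar r (dist t i (Suc i)) * (1 - Ar r (dist t i (Suc i))))"
    unfolding alpha_eq by simp
  then show ?thesis unfolding beta_def by (simp only: Re_complex_of_real)
qed

context fixes m assumes m: "Suc m < n"
begin

lemma dfacts: assumes t: "t \<in> S1"
  shows "dist t (Suc m) (Suc (Suc m)) \<noteq> 0" "\<bar>dist t (Suc m) (Suc (Suc m))\<bar> \<le> int r - 1"
  using d_range[OF S1_facts(3)[OF t] rkl k l] m S1_facts(1)[OF t] by auto

lemma alpha_swp: "t \<in> S1 \<Longrightarrow> alpha s (swp (Suc m) t) (Suc m) = 1 - alpha s t (Suc m)"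
proof -
  assume t: "t \<in> S1"
  have nz: "Qr r (dist t (Suc m) (Suc (Suc m))) \<noteq> 0" using Q_nz[OF r3] dfacts[OF t] by simp
  show ?thesis unfolding alpha_eq
    using dist_swp[of m t] m S1_facts(1)[OF t] A_neg[OF r3 nz] by simp
qed

lemma alpha_phi: "t \<in> S1 \<Longrightarrow> alpha s (phi t) (Suc m) = 1 - alpha s t (Suc m)"
proof -
  assume t: "t \<in> S1"
  have nz: "Qr r (dist t (Suc m) (Suc (Suc m))) \<noteq> 0" using Q_nz[OF r3] dfacts[OF t] by simp
  obtain j where j: "dist (phi t) (Suc m) (Suc (Suc m)) = int (k + l) * j - dist t (Suc m) (Suc (Suc m))"
    using dist_phi[of m t l k] m S1_facts(1)[OF t] l by auto
  have rj: "int r * j = int (k + l) * j" using rkl by simp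
  have "dist (phi t) (Suc m) (Suc (Suc m)) = - dist t (Suc m) (Suc (Suc m)) + int r * j"
    using j rj by linarith
  then have "Ar r (dist (phi t) (Suc m) (Suc (Suc m))) = Ar r (- dist t (Suc m) (Suc (Suc m)) + int r * j)"
    by simp
  also have "\<dots> = Ar r (- dist t (Suc m) (Suc (Suc m)))" by (rule A_per[OF r3])
  also have "\<dots> = 1 - Ar r (dist t (Suc m) (Suc (Suc m)))" by (rule A_neg[OF r3 nz])
  finally show ?thesis unfolding alpha_eq by simp
qed

lemma beta_of_1m: "alpha s t' i = 1 - alpha s t i \<Longrightarrow> beta s t' i = beta s t i"
proof -
  assume h: "alpha s t' i = 1 - alpha s t i"
  have "alpha s t' i * (1 - alpha s t' i) = alpha s t i * (1 - alpha s t i)"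
    unfolding h by (simp add: algebra_simps)
  then show ?thesis unfolding beta_def by simp
qed

lemma beta_swp: "t \<in> S1 \<Longrightarrow> beta s (swp (Suc m) t) (Suc m) = beta s t (Suc m)"
  using beta_of_1m alpha_swp by blast

lemma beta_phi: "t \<in> S1 \<Longrightarrow> beta s (phi t) (Suc m) = beta s t (Suc m)"
  using beta_of_1m alpha_phi by blast

lemma beta_sq: "t \<in> S1 \<Longrightarrow> beta s t (Suc m) * beta s t (Suc m) = alpha s t (Suc m) * (1 - alpha s t (Suc m))"
proof -
  assume t: "t \<in> S1"
  define A where "A = Ar r (dist t (Suc m) (Suc (Suc m)))"
  have "A * (1 - A) \<ge> 0" unfolding A_def using A_prod[OF r3] dfacts[OF t] by simp
  then have "sqrt (A * (1 - A)) * sqrt (A * (1 - A)) = A * (1 - A)" by simp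
  then have "complex_of_real (sqrt (A * (1 - A))) * complex_of_real (sqrt (A * (1 - A))) =
      complex_of_real (A * (1 - A))" by (simp flip: of_real_mult)
  then show ?thesis unfolding beta_eq alpha_eq A_def[symmetric] by simp
qed

lemma alpha_sq: "t \<in> S1 \<Longrightarrow> swp (Suc m) t \<notin> S1 \<Longrightarrow> alpha s t (Suc m) * alpha s t (Suc m) = alpha s t (Suc m)"
proof -
  assume t: "t \<in> S1" and nin: "swp (Suc m) t \<notin> S1"
  have "dist t (Suc m) (Suc (Suc m)) \<in> {1, -1, 1 - int r}"
  proof (rule ccontr)
    assume "dist t (Suc m) (Suc (Suc m)) \<notin> {1, -1, 1 - int r}"
    then have "tchar k r lam (swp (Suc m) t)"
      using swp_in[OF S1_facts(3)[OF t] rkl k l] m S1_facts(1)[OF t] by simp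
    then show False using nin tchar_imp_tabs by blast
  qed
  then have "Ar r (dist t (Suc m) (Suc (Suc m))) \<in> {0, 1}"
    using A_1[OF r3] A_m1[OF r3] A_1mr[OF r3] by auto
  then show ?thesis unfolding alpha_eq by auto
qed

end
end

context jws begin

lemma rows_swp: "t \<in> S1 \<Longrightarrow> Suc m < n \<Longrightarrow> \<forall>x\<in>set (swp (Suc m) t). fst x < k"
proof -
  assume t: "t \<in> S1" and m: "Suc m < n"
  have "set (swp (Suc m) t) = set t" using m S1_facts(1)[OF t] by (simp add: swp_eq)
  then show ?thesis using S1_facts(4)[OF t] by simp
qed

context fixes m assumes m: "Suc m < n"
begin

lemma lt_m: "t \<in> S1 \<Longrightarrow> Suc m < length t" using S1_facts(1) m by simp

lemma swp_in_iff: "t \<in> S1 \<Longrightarrow> swp (Suc m) (phi t) \<in> S2 \<longleftrightarrow> swp (Suc m) t \<in> S1"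
proof -
  assume t: "t \<in> S1"
  have e: "swp (Suc m) (phi t) = phi (swp (Suc m) t)" using map_swp[OF lt_m[OF t]] by simp
  show ?thesis
  proof
    assume "swp (Suc m) (phi t) \<in> S2"
    then have "phi (swp (Suc m) t) \<in> S2" using e by simp
    then have "psi (phi (swp (Suc m) t)) \<in> S1" by (rule psi_in)
    then show "swp (Suc m) t \<in> S1" by (simp only: psi_phi[OF rows_swp[OF t m]])
  qed (use e phi_in in simp)
qed

lemma phi_eq_swp: "t \<in> S1 \<Longrightarrow> t0 \<in> S1 \<Longrightarrow> phi t0 = swp (Suc m) (phi t) \<longleftrightarrow> t0 = swp (Suc m) t"
proof -
  assume t: "t \<in> S1" and t0: "t0 \<in> S1"
  have e: "swp (Suc m) (phi t) = phi (swp (Suc m) t)" using map_swp[OF lt_m[OF t]] by simp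
  show ?thesis
  proof
    assume "phi t0 = swp (Suc m) (phi t)"
    then have "psi (phi t0) = psi (phi (swp (Suc m) t))" using e by simp
    then show "t0 = swp (Suc m) t" using psi_phi[OF rows_swp[OF t m]] psi_phi[OF S1_facts(4)[OF t0]] by simp
  qed (use e in simp)
qed

abbreviation "E1 \<equiv> Emat s k r lam (Suc m)"

lemma erow1: "erow S1 E1 (swp (Suc m)) (\<lambda>t. alpha s t (Suc m)) (\<lambda>t. beta s t (Suc m))"
proof
  show "finite S1" by (rule finite_tabs)
next
  fix u v assume u: "u \<in> S1" and v: "v \<in> S1"
  have ne: "swp (Suc m) u \<noteq> u" using swp_neq[OF lt_m[OF u] S1_facts(2)[OF u]] .
  show "E1 u v = (if v = u then alpha s u (Suc m) else 0) +
      (if swp (Suc m) u \<in> S1 \<and> v = swp (Suc m) u then beta s u (Suc m) else 0)"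
  proof (cases "u = v")
    case True then show ?thesis using ne by (simp add: Emat_def)
  next
    case False
    have iff: "(u = swp (Suc m) v \<and> swp (Suc m) v \<in> S1) \<longleftrightarrow> (swp (Suc m) u \<in> S1 \<and> v = swp (Suc m) u)"
      using swp_swp[OF lt_m[OF u]] swp_swp[OF lt_m[OF v]] u v by auto
    show ?thesis
    proof (cases "swp (Suc m) u \<in> S1 \<and> v = swp (Suc m) u")
      case True
      then have "beta s v (Suc m) = beta s u (Suc m)" using beta_swp[OF m u] by simp
      then show ?thesis using False True iff u by (simp add: Emat_def)
    next
      case F2: False
      have nn: "\<not> (u = swp (Suc m) v \<and> swp (Suc m) v \<in> S1)" using F2 iff by blast
      have "E1 u v = 0" using False nn unfolding Emat_def by auto
      then show ?thesis using False F2 by auto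
    qed
  qed
next
  fix u assume u: "u \<in> S1"
  show "swp (Suc m) u \<noteq> u" using swp_neq[OF lt_m[OF u] S1_facts(2)[OF u]] .
  show "swp (Suc m) u \<in> S1 \<Longrightarrow> swp (Suc m) (swp (Suc m) u) = u" using swp_swp[OF lt_m[OF u]] .
  show "swp (Suc m) u \<in> S1 \<Longrightarrow> alpha s (swp (Suc m) u) (Suc m) = 1 - alpha s u (Suc m)"
    using alpha_swp[OF m u] .
  show "swp (Suc m) u \<in> S1 \<Longrightarrow> beta s (swp (Suc m) u) (Suc m) = beta s u (Suc m)"
    using beta_swp[OF m u] .
  show "swp (Suc m) u \<in> S1 \<Longrightarrow> beta s u (Suc m) * beta s u (Suc m) = alpha s u (Suc m) * (1 - alpha s u (Suc m))"
    using beta_sq[OF m u] .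
  show "swp (Suc m) u \<notin> S1 \<Longrightarrow> alpha s u (Suc m) * alpha s u (Suc m) = alpha s u (Suc m)"
    using alpha_sq[OF m u] .
qed

lemma inv1: "mat_inv S1 (rho s k r lam (Suc m)) =
   (\<lambda>u w. if u \<in> S1 \<and> w \<in> S1 then (delta u w - (1 + s\<^sup>2) * E1 u w) / s\<^sup>2 else 0)"
proof -
  have q: "s\<^sup>2 \<noteq> 0" using s_ne0 by simp
  have "rho s k r lam (Suc m) = (\<lambda>u w. s\<^sup>2 * delta u w - (1 + s\<^sup>2) * E1 u w)"
    by (intro ext) (simp add: rho_def delta_def)
  then show ?thesis using erow.inv_formula[OF erow1 q] by simp
qed

lemma intertw:
  assumes t: "t \<in> S1" and t0: "t0 \<in> S1"
  shows "eps t * rho s l r nu (Suc m) (phi t0) (phi t) =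
     eps t0 * (- delta t t0 + (1 + s\<^sup>2) * E1 t t0)"
proof -
  let ?q = "s\<^sup>2"
  let ?a = "alpha s t (Suc m)"
  consider "t0 = t" | "t0 \<noteq> t" "t0 = swp (Suc m) t" "swp (Suc m) t \<in> S1"
    | "t0 \<noteq> t" "\<not> (t0 = swp (Suc m) t \<and> swp (Suc m) t \<in> S1)" by blast
  then show ?thesis
  proof cases
    case 1
    have r1: "rho s l r nu (Suc m) (phi t) (phi t) = ?q - (1 + ?q) * (1 - ?a)"
      using alpha_phi[OF m t] by (simp add: rho_def Emat_def)
    have e1: "E1 t t = ?a" by (simp add: Emat_def)
    have d1: "delta t t = 1" by (simp add: delta_def)
    show ?thesis unfolding 1 unfolding r1 e1 d1 by (simp add: algebra_simps)
  next
    case 2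
    have pne: "phi t0 \<noteq> phi t" using phi_inj[OF t0 t] 2 by simp
    have r2: "rho s l r nu (Suc m) (phi t0) (phi t) = - (1 + ?q) * beta s t (Suc m)"
      using pne phi_eq_swp[OF t t0] swp_in_iff[OF t] 2 beta_phi[OF m t] by (simp add: rho_def Emat_def algebra_simps)
    have e2: "E1 t t0 = beta s t (Suc m)"
    proof -
      have "t = swp (Suc m) t0" using 2 swp_swp[OF lt_m[OF t]] by simp
      moreover have "swp (Suc m) t0 \<in> S1" using calculation t by simp
      ultimately show ?thesis using 2 beta_swp[OF m t] by (simp add: Emat_def)
    qed
    have p2: "eps t0 = - eps t" using 2 eps_swp[OF lt_m[OF t] S1_facts(2)[OF t]] by simp
    have d2: "delta t t0 = 0" using 2 by (simp add: delta_def)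
    show ?thesis unfolding r2 e2 p2 d2 by (simp add: algebra_simps)
  next
    case 3
    have pne: "phi t0 \<noteq> phi t" using phi_inj[OF t0 t] 3 by simp
    have "rho s l r nu (Suc m) (phi t0) (phi t) = 0"
      using pne phi_eq_swp[OF t t0] swp_in_iff[OF t] 3 by (auto simp: rho_def Emat_def)
    moreover have "E1 t t0 = 0"
    proof -
      have "\<not> (t = swp (Suc m) t0 \<and> swp (Suc m) t0 \<in> S1)"
        using 3 swp_swp[OF lt_m[OF t0]] t0 by auto
      then show ?thesis using 3 by (auto simp: Emat_def)
    qed
    ultimately show ?thesis using 3 by (simp add: delta_def)
  qed
qed

end

lemma main: "equiv_reps n S1 (\<lambda>i. (\<lambda>u w. (- s\<^sup>2) * contragr S1 (rho s k r lam i) u w)) S2 (rho s l r nu)"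
  unfolding equiv_reps_def
proof (rule exI[of _ "\<lambda>u v. if u = phi v then eps v else 0"], rule exI[of _ "\<lambda>v u. if u = phi v then eps v else 0"], intro conjI ballI)
  have fin1: "finite S1" and fin2: "finite S2" by (rule finite_tabs)+
  fix u w assume u: "u \<in> S2" and w: "w \<in> S2"
  define t0 where "t0 = psi u"
  have t0: "t0 \<in> S1" "phi t0 = u" using psi_in[OF u] phi_psi[OF u] by (simp_all add: t0_def)
  have "(\<Sum>v\<in>S1. (if u = phi v then eps v else 0) * (if w = phi v then eps v else 0)) =
      (\<Sum>v\<in>S1. if v = t0 then eps t0 * (if w = u then eps t0 else 0) else 0)"
  proof (intro sum.cong refl)
    fix v assume v: "v \<in> S1"
    have "u = phi v \<longleftrightarrow> v = t0" using phi_inj[OF v t0(1)] t0(2) by auto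
    then show "(if u = phi v then eps v else 0) * (if w = phi v then eps v else 0) =
        (if v = t0 then eps t0 * (if w = u then eps t0 else 0) else 0)" using t0 by auto
  qed
  also have "\<dots> = (if u = w then 1 else 0)" using fin1 t0(1) eps_sq[of t0] by (simp add: sum.delta')
  finally show "(\<Sum>v\<in>S1. (if u = phi v then eps v else 0) * (if w = phi v then eps v else 0)) =
      (if u = w then 1 else 0)" .
next
  have fin1: "finite S1" and fin2: "finite S2" by (rule finite_tabs)+
  fix u w assume u: "u \<in> S1" and w: "w \<in> S1"
  have "(\<Sum>v\<in>S2. (if v = phi u then eps u else 0) * (if v = phi w then eps w else 0)) =
      (\<Sum>v\<in>S2. if v = phi u then eps u * (if phi u = phi w then eps w else 0) else 0)"
    by (intro sum.cong refl) auto
  also have "\<dots> = eps u * (if phi u = phi w then eps w else 0)" using fin2 phi_in[OF u] by (simp add: sum.delta')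
  also have "\<dots> = (if u = w then 1 else 0)" using phi_inj[OF u w] eps_sq[of u] eps_sq[of w] by simp
  finally show "(\<Sum>v\<in>S2. (if v = phi u then eps u else 0) * (if v = phi w then eps w else 0)) =
      (if u = w then 1 else 0)" .
next
  have fin1: "finite S1" and fin2: "finite S2" by (rule finite_tabs)+
  fix i u t assume i: "i \<in> {1..<n}" and u: "u \<in> S2" and t: "t \<in> S1"
  obtain m where im: "i = Suc m" using i by (cases i) auto
  have m: "Suc m < n" using i im by simp
  define t0 where "t0 = psi u"
  have t0: "t0 \<in> S1" "phi t0 = u" using psi_in[OF u] phi_psi[OF u] by (simp_all add: t0_def)
  have "(\<Sum>v\<in>S2. rho s l r nu i u v * (if v = phi t then eps t else 0)) =
      (\<Sum>v\<in>S2. if v = phi t then rho s l r nu i u (phi t) * eps t else 0)"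
    by (intro sum.cong refl) auto
  also have "\<dots> = rho s l r nu i u (phi t) * eps t" using fin2 phi_in[OF t] by (simp add: sum.delta')
  also have "\<dots> = eps t0 * (- delta t t0 + (1 + s\<^sup>2) * Emat s k r lam i t t0)"
    using intertw[OF m t t0(1)] t0(2) im by (simp add: mult.commute)
  also have "\<dots> = eps t0 * ((- s\<^sup>2) * contragr S1 (rho s k r lam i) t0 t)"
  proof -
    have q: "s\<^sup>2 \<noteq> 0" using s_ne0 by simp
    have "contragr S1 (rho s k r lam i) t0 t = (delta t t0 - (1 + s\<^sup>2) * Emat s k r lam i t t0) / s\<^sup>2"
      unfolding contragr_def using inv1[OF m] im t t0(1) by simp
    then have "(- s\<^sup>2) * contragr S1 (rho s k r lam i) t0 t = - (delta t t0 - (1 + s\<^sup>2) * Emat s k r lam i t t0)"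
      using q by simp
    then show ?thesis by (simp add: algebra_simps)
  qed
  also have "\<dots> = (\<Sum>v\<in>S1. if v = t0 then eps t0 * ((- s\<^sup>2) * contragr S1 (rho s k r lam i) t0 t) else 0)"
    using fin1 t0(1) by (simp add: sum.delta')
  also have "\<dots> = (\<Sum>v\<in>S1. (if u = phi v then eps v else 0) * ((- s\<^sup>2) * contragr S1 (rho s k r lam i) v t))"
  proof (intro sum.cong refl)
    fix v assume v: "v \<in> S1"
    have "u = phi v \<longleftrightarrow> v = t0" using phi_inj[OF v t0(1)] t0(2) by auto
    then show "(if v = t0 then eps t0 * ((- s\<^sup>2) * contragr S1 (rho s k r lam i) t0 t) else 0) =
      (if u = phi v then eps v else 0) * ((- s\<^sup>2) * contragr S1 (rho s k r lam i) v t)" by auto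
  qed
  finally show "(\<Sum>v\<in>S2. rho s l r nu i u v * (if v = phi t then eps t else 0)) =
      (\<Sum>v\<in>S1. (if u = phi v then eps v else 0) * ((- s\<^sup>2) * contragr S1 (rho s k r lam i) v t))" .
qed

end

theorem theorem3p3:
  fixes r k :: nat and s :: complex and lam :: "nat list"
  assumes "r \<ge> 3"
    and "s = exp (complex_of_real pi * \<i> / of_nat r) \<or> s = exp (- complex_of_real pi * \<i> / of_nat r)"
    and "1 \<le> k" and "k \<le> r - 1"
    and "young_adm k r lam"
  shows "young_adm (r - k) r (rconj r lam) \<and>
         equiv_reps (sum_list lam)
           (tabs k r lam)
           (\<lambda>i. (\<lambda>u w. (- s\<^sup>2) * contragr (tabs k r lam) (rho s k r lam i) u w))
           (tabs (r - k) r (rconj r lam))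
           (rho s (r - k) r (rconj r lam))"
proof -
  interpret jws r k "r - k" s lam
    using assms by unfold_locales auto
  show ?thesis using ya2 main by simp
qed

end
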